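(* Let $d\ge2$, $k\ge1$, $m\ge0$ be integers, $L\ge1$. For $s\in\mathbb R^d$ let $D_s=\bigcup_{j=1}^pD^j_s$ ($p\ge0$; $D_s=\emptyset$ if $p=0$), where $D^j_s=\{z=(s_1,\dots,s_k)\in\mathbb R^{kd}: c^j_0s+\sum_{i=1}^kc^j_is_i=0\}$ with real $c^j_i$ and $(c^j_1,\dots,c^j_k)\ne0$. Let $G_s(z,\theta;\nu)$ be measurable in $(z,\theta,\nu)\in\mathbb R^{kd}\times\mathbb R^m\times(0,1/2]$, $C^2$ in $z$, and satisfy $$|\partial^\alpha_zG_s(z,\theta;\nu)|\le\nu^{-|\alpha|}C^\#(s)C^\#(z)C^\#(\theta)\qquad\text{for }0\le|\alpha|\le2$$ for all values of the arguments. Put $$S_s=\int_{\mathbb R^m}L^{-kd}\sum_{z\in(\mathbb Z^d_L)^k\setminus D_s}G_s(z,\theta;\nu)\,d\theta,\qquad J_s=\int_{\mathbb R^m}\int_{\mathbb R^{kd}}G_s(z,\theta;\nu)\,dz\,d\theta$$ (no $\theta$-integration if $m=0$). Then $|S_s-J_s|\le C^\#(s)\nu^{-2}L^{-2}$ for all $s\in\mathbb R^d$.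
   Context: $\mathbb Z^d_L=L^{-1}\mathbb Z^d$, $\langle x\rangle=(1+|x|^2)^{1/2}$. $C^\#(\cdot)$ denotes (possibly different) nonnegative continuous functions with $C^\#(x)\le C_N\langle x\rangle^{-N}$ for every $N$; the function in the conclusion does not depend on $\nu$ and $L$. *)

theory Defs
  imports "HOL-Analysis.Analysis"
begin

text \<open>Rapidly decaying class C-sharp on a Euclidean space: nonnegative continuous
  functions with f x \<le> C_N \<langle>x\<rangle>^(-N) for every N.\<close>
definition rapid_decay :: "('a::euclidean_space \<Rightarrow> real) \<Rightarrow> bool" where
  "rapid_decay f \<longleftrightarrow> continuous_on UNIV f \<and> (\<forall>x. 0 \<le> f x) \<and>
     (\<forall>N::nat. \<exists>C. \<forall>x. f x \<le> C * (1 + (norm x)\<^sup>2) powr (- real N / 2))"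

text \<open>R^m (m \<ge> 0 allowed) modelled as extensional functions on {..<m}; carrier
  of the product measure Pi_M {..<m} (\<lambda>_. lborel).\<close>
abbreviation Rm :: "nat \<Rightarrow> (nat \<Rightarrow> real) set" where
  "Rm m \<equiv> PiE {..<m} (\<lambda>_. UNIV)"

abbreviation lebesgue_Rm :: "nat \<Rightarrow> (nat \<Rightarrow> real) measure" where
  "lebesgue_Rm m \<equiv> Pi\<^sub>M {..<m} (\<lambda>_. lborel)"

definition rapid_decay_Rm :: "nat \<Rightarrow> ((nat \<Rightarrow> real) \<Rightarrow> real) \<Rightarrow> bool" where
  "rapid_decay_Rm m f \<longleftrightarrow> continuous_on (Rm m) f \<and> (\<forall>x\<in>Rm m. 0 \<le> f x) \<and>
     (\<forall>N::nat. \<exists>C. \<forall>x\<in>Rm m. f x \<le> C * (1 + (\<Sum>i<m. (x i)\<^sup>2)) powr (- real N / 2))"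

definition has_dpart :: "'a::euclidean_space \<Rightarrow> ('a \<Rightarrow> real) \<Rightarrow> 'a \<Rightarrow> bool" where
  "has_dpart b f x \<longleftrightarrow> (\<lambda>t::real. f (x + t *\<^sub>R b)) differentiable (at 0)"

definition dpart :: "'a::euclidean_space \<Rightarrow> ('a \<Rightarrow> real) \<Rightarrow> 'a \<Rightarrow> real" where
  "dpart b f x = deriv (\<lambda>t::real. f (x + t *\<^sub>R b)) 0"

definition C2_fun :: "('a::euclidean_space \<Rightarrow> real) \<Rightarrow> bool" where
  "C2_fun f \<longleftrightarrow> (\<forall>b\<in>Basis. \<forall>x. has_dpart b f x) \<and>
     (\<forall>b\<in>Basis. \<forall>c\<in>Basis. \<forall>x. has_dpart c (dpart b f) x) \<and>
     (\<forall>b\<in>Basis. \<forall>c\<in>Basis. continuous_on UNIV (dpart c (dpart b f)))"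

definition latt :: "real \<Rightarrow> (real^'d) set" where
  "latt L = {x. \<forall>i. L * x $ i \<in> \<int>}"

definition latt_k :: "real \<Rightarrow> ((real^'d)^'k) set" where
  "latt_k L = {z. \<forall>i. z $ i \<in> latt L}"

definition Dset :: "nat \<Rightarrow> (nat \<Rightarrow> real) \<Rightarrow> (nat \<Rightarrow> 'k::finite \<Rightarrow> real) \<Rightarrow> real^'d
     \<Rightarrow> ((real^'d)^'k) set" where
  "Dset p c0 c s = (\<Union>j<p. {z. c0 j *\<^sub>R s + (\<Sum>i\<in>UNIV. c j i *\<^sub>R z $ i) = 0})"

end

theory Submission
  imports Defs "HOL-Probability.Sinc_Integral"
begin


definition phi1 :: "real \<Rightarrow> real" where "phi1 t = 1 / (1 + t\<^sup>2)"

definition Phi :: "'a::euclidean_space \<Rightarrow> real" where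
  "Phi x = (\<Prod>b\<in>Basis. phi1 (x \<bullet> b))"

lemma phi1_pos: "0 < phi1 t" unfolding phi1_def by (simp add: add_pos_nonneg)
lemma phi1_le1: "phi1 t \<le> 1" unfolding phi1_def by (simp add: divide_le_eq_1 add_pos_nonneg)
lemma Phi_pos: "0 < Phi x" unfolding Phi_def by (simp add: prod_pos phi1_pos)
lemma Phi_le1: "Phi x \<le> 1" unfolding Phi_def by (rule prod_le_1) (auto simp: phi1_le1 phi1_pos less_imp_le)

lemma powr_le_Phi:
  fixes x :: "'a::euclidean_space"
  shows "(1 + (norm x)\<^sup>2) powr (- real DIM('a)) \<le> Phi x"
proof -
  have "(\<Prod>b\<in>Basis. 1 + (x \<bullet> b)\<^sup>2) \<le> (\<Prod>b\<in>(Basis::'a set). 1 + (norm x)\<^sup>2)"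
    by (rule prod_mono) (auto simp: add_pos_nonneg intro: Basis_le_norm abs_ge_zero power2_abs power_mono order_trans[OF _ power_mono[OF Basis_le_norm]] simp del: power2_abs)
  also have "\<dots> = (1 + (norm x)\<^sup>2) ^ DIM('a)" by simp
  finally have *: "(\<Prod>b\<in>Basis. 1 + (x \<bullet> b)\<^sup>2) \<le> (1 + (norm x)\<^sup>2) ^ DIM('a)" .
  have pos: "0 < (\<Prod>b\<in>(Basis::'a set). 1 + (x \<bullet> b)\<^sup>2)"
    by (rule prod_pos) (auto simp: add_pos_nonneg)
  have "(1 + (norm x)\<^sup>2) powr (- real DIM('a)) = 1 / (1 + (norm x)\<^sup>2) ^ DIM('a)"
    by (simp add: powr_minus powr_realpow divide_inverse add_pos_nonneg)
  also have "\<dots> \<le> 1 / (\<Prod>b\<in>Basis. 1 + (x \<bullet> b)\<^sup>2)"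
    using * pos by (intro divide_left_mono) auto
  also have "\<dots> = Phi x" unfolding Phi_def phi1_def by (simp add: prod_dividef)
  finally show ?thesis .
qed

lemma rapid_Phi:
  fixes w :: "'a::euclidean_space \<Rightarrow> real"
  assumes "rapid_decay w"
  shows "\<exists>K\<ge>0. \<forall>x. w x \<le> K * Phi x"
proof -
  from assms obtain C where C: "\<forall>x. w x \<le> C * (1 + (norm x)\<^sup>2) powr (- real (2*DIM('a)) / 2)"
    unfolding rapid_decay_def by blast
  have nn: "\<forall>x. 0 \<le> w x" using assms unfolding rapid_decay_def by blast
  have "0 \<le> C" using C[rule_format, of 0] nn by (simp add: zero_le_mult_iff) (meson order_trans)
  show ?thesis
  proof (intro exI[of _ C] conjI allI)
    fix x
    have "w x \<le> C * (1 + (norm x)\<^sup>2) powr (- real DIM('a))" using C by simp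
    also have "\<dots> \<le> C * Phi x" using \<open>0 \<le> C\<close> powr_le_Phi by (intro mult_left_mono) auto
    finally show "w x \<le> C * Phi x" .
  qed fact
qed

lemma phi1_shift:
  assumes "\<bar>a - b\<bar> \<le> 1/2"
  shows "phi1 a \<le> 5/2 * phi1 b"
proof -
  have "(a - b)\<^sup>2 \<le> 1/4"
  proof -
    have "(a-b)\<^sup>2 = \<bar>a-b\<bar>\<^sup>2" by simp
    also have "\<dots> \<le> (1/2)\<^sup>2" using assms by (intro power_mono) auto
    finally show ?thesis by (simp add: power2_eq_square)
  qed
  moreover have "b\<^sup>2 \<le> 2 * a\<^sup>2 + 2 * (a - b)\<^sup>2"
    using sum_squares_ge_zero[of "a + (a - b)" 0] by (simp add: power2_eq_square algebra_simps)
  ultimately have "b\<^sup>2 \<le> 2 * a\<^sup>2 + 1/2" by linarith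
  hence "1 + b\<^sup>2 \<le> 5/2 * (1 + a\<^sup>2)" using zero_le_power2[of a] unfolding distrib_left by linarith
  thus ?thesis unfolding phi1_def
    by (simp add: field_simps add_pos_nonneg)
qed

lemma Phi_shift:
  fixes x z :: "'a::euclidean_space"
  assumes "\<forall>c\<in>Basis. \<bar>(x - z) \<bullet> c\<bar> \<le> 1/2"
  shows "Phi x \<le> (5/2) ^ DIM('a) * Phi z"
proof -
  have "Phi x \<le> (\<Prod>b\<in>(Basis::'a set). 5/2 * phi1 (z \<bullet> b))"
    unfolding Phi_def
  proof (intro prod_mono conjI)
    fix b :: 'a assume b: "b \<in> Basis"
    then have "\<bar>x \<bullet> b - z \<bullet> b\<bar> \<le> 1/2" using assms by (simp add: inner_diff_left)
    then show "phi1 (x \<bullet> b) \<le> 5/2 * phi1 (z \<bullet> b)" by (rule phi1_shift)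
  qed (simp add: phi1_pos less_imp_le)
  also have "\<dots> = (\<Prod>b\<in>(Basis::'a set). (5/2::real)) * Phi z" unfolding Phi_def by (rule prod.distrib)
  also have "\<dots> = (5/2) ^ DIM('a) * Phi z" by simp
  finally show ?thesis .
qed



lemma sum_phi1_nat:
  assumes L: "L \<ge> (1::real)"
  shows "(\<Sum>j=1..M. phi1 (real j / L)) \<le> 2*L - 2*L\<^sup>2/(L + real M)"
proof (induction M)
  case 0
  then show ?case using L by (simp add: power2_eq_square)
next
  case (Suc M)
  define b where "b = real M + 1"
  have bpos: "b > 0" unfolding b_def by simp
  have Lpos: "L > 0" using L by simp
  have e1: "phi1 (real (Suc M) / L) = L\<^sup>2 / (L\<^sup>2 + b\<^sup>2)"
    unfolding phi1_def b_def using Lpos by (simp add: field_simps power2_eq_square)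
  have e2: "2*L\<^sup>2/(L + real M) - 2*L\<^sup>2/(L + real (Suc M)) = 2*L\<^sup>2/((L + real M)*(L + real M + 1))"
    using Lpos by (simp add: field_simps power2_eq_square)
  have i1: "(L + real M)*(L + real M + 1) \<le> (L + b)\<^sup>2"
    unfolding b_def power2_eq_square using Lpos by (intro mult_mono) auto
  have i2: "(L + b)\<^sup>2 \<le> 2 * (L\<^sup>2 + b\<^sup>2)"
  proof -
    have "0 \<le> (L - b)\<^sup>2" by simp
    thus ?thesis by (simp add: power2_eq_square algebra_simps)
  qed
  have pos: "0 < (L + real M)*(L + real M + 1)" using Lpos by (intro mult_pos_pos) auto
  have "L\<^sup>2 / (L\<^sup>2 + b\<^sup>2) = 2*L\<^sup>2 / (2*(L\<^sup>2 + b\<^sup>2))" by (simp only: mult_divide_mult_cancel_left_if) simp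
  also have "\<dots> \<le> 2*L\<^sup>2/((L + real M)*(L + real M + 1))"
    using i1 i2 pos by (intro divide_left_mono) auto
  finally have key: "phi1 (real (Suc M) / L) \<le> 2*L\<^sup>2/(L + real M) - 2*L\<^sup>2/(L + real (Suc M))"
    using e1 e2 by simp
  have "(\<Sum>j=1..Suc M. phi1 (real j / L)) = (\<Sum>j=1..M. phi1 (real j / L)) + phi1 (real (Suc M) / L)"
    by simp
  also have "\<dots> \<le> 2*L - 2*L\<^sup>2/(L + real (Suc M))" using Suc.IH key by simp
  finally show ?case .
qed

lemma sum_phi1_half:
  assumes L: "L \<ge> (1::real)" and fin: "finite S" and S: "S \<subseteq> {t. L*t \<in> \<int> \<and> 0 \<le> t}"
  shows "(\<Sum>t\<in>S. phi1 t) \<le> 1 + 2*L"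
proof -
  define g where "g t = nat \<lfloor>L*t\<rfloor>" for t
  have Lpos: "L > 0" using L by simp
  have gt: "real (g t) = L*t" if "t \<in> S" for t
  proof -
    from that S have "L*t \<in> \<int>" "0 \<le> t" by auto
    then obtain k where k: "L*t = of_int k" by (auto elim: Ints_cases)
    with \<open>0\<le>t\<close> Lpos have "0 \<le> k" by (metis of_int_0_le_iff mult_nonneg_nonneg less_imp_le)
    thus ?thesis unfolding g_def k by simp
  qed
  have tg: "t = real (g t) / L" if "t \<in> S" for t using gt[OF that] Lpos by (simp add: field_simps)
  have inj: "inj_on g S" by (rule inj_onI) (metis tg)
  have "(\<Sum>t\<in>S. phi1 t) = (\<Sum>t\<in>S. phi1 (real (g t) / L))" by (rule sum.cong) (auto dest: tg)
  also have "\<dots> = (\<Sum>j\<in>g ` S. phi1 (real j / L))" by (simp add: sum.reindex[OF inj])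
  also have "\<dots> \<le> (\<Sum>j\<in>{0..Max (g ` S)}. phi1 (real j / L))"
    using fin by (intro sum_mono2) (auto simp: phi1_pos less_imp_le)
  also have "\<dots> = phi1 0 + (\<Sum>j\<in>{1..Max (g ` S)}. phi1 (real j / L))"
    by (simp add: sum.atLeast_Suc_atMost)
  also have "\<dots> \<le> 1 + 2*L"
  proof -
    have "(\<Sum>j\<in>{1..Max (g ` S)}. phi1 (real j / L)) \<le> 2*L - 2*L\<^sup>2/(L + real (Max (g ` S)))"
      by (rule sum_phi1_nat[OF L])
    also have "\<dots> \<le> 2*L" using Lpos by simp
    finally show ?thesis using phi1_le1[of 0] by simp
  qed
  finally show ?thesis .
qed

lemma phi1_minus[simp]: "phi1 (-t) = phi1 t" unfolding phi1_def by simp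

lemma sum_phi1_lat:
  assumes L: "L \<ge> (1::real)" and fin: "finite T" and T: "T \<subseteq> {t. L*t \<in> \<int>}"
  shows "(\<Sum>t\<in>T. phi1 t) \<le> 6*L"
proof -
  have fin1: "finite (T \<inter> {0..})" "finite (T \<inter> -{0..})" using fin by auto
  have "(\<Sum>t\<in>T. phi1 t) = (\<Sum>t\<in>T \<inter> {0..}. phi1 t) + (\<Sum>t\<in>T \<inter> -{0..}. phi1 t)"
    using fin by (metis sum.Int_Diff Diff_eq)
  also have "(\<Sum>t\<in>T \<inter> {0..}. phi1 t) \<le> 1 + 2*L"
    using T by (intro sum_phi1_half[OF L fin1(1)]) auto
  also have "(\<Sum>t\<in>T \<inter> -{0..}. phi1 t) = (\<Sum>t\<in>uminus ` (T \<inter> -{0..}). phi1 t)"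
    by (subst sum.reindex) (auto simp: inj_on_def)
  also have "\<dots> \<le> 1 + 2*L"
  proof (rule sum_phi1_half[OF L])
    show "finite (uminus ` (T \<inter> -{0..}))" using fin1 by simp
    show "uminus ` (T \<inter> - {0..}) \<subseteq> {t. L * t \<in> \<int> \<and> 0 \<le> t}"
    proof
      fix x assume "x \<in> uminus ` (T \<inter> - {0..})"
      then obtain t where t: "t \<in> T" "t < 0" "x = -t" by auto
      have "L * x = - (L*t)" using t by simp
      moreover have "L*t \<in> \<int>" using t T by auto
      ultimately show "x \<in> {t. L * t \<in> \<int> \<and> 0 \<le> t}" using t by simp
    qed
  qed
  finally show ?thesis using L by simp
qed

definition lat :: "real \<Rightarrow> 'a::euclidean_space set" where
  "lat L = {x. \<forall>b\<in>Basis. L * (x \<bullet> b) \<in> \<int>}"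

lemma lat_sum_finite:
  fixes V :: "'a::euclidean_space set"
  assumes V: "V \<subseteq> Basis" and L: "L \<ge> 1" and fin: "finite F"
    and F: "F \<subseteq> {x\<in>lat L. \<forall>b\<in>V. x \<bullet> b = 0}"
  shows "(\<Sum>x\<in>F. Phi x) \<le> (6*L) ^ card (Basis - V)"
proof -
  define \<rho> where "\<rho> x = restrict (\<lambda>b. x \<bullet> b) Basis" for x :: 'a
  define T where "T b = (\<lambda>x. x \<bullet> b) ` F" for b :: 'a
  have inj: "inj_on \<rho> F"
  proof (rule inj_onI)
    fix x y assume "\<rho> x = \<rho> y"
    hence "\<forall>b\<in>Basis. x \<bullet> b = y \<bullet> b" unfolding \<rho>_def by (metis restrict_apply')
    thus "x = y" by (simp add: euclidean_eq_iff[of x y])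
  qed
  have finT: "finite (T b)" for b unfolding T_def using fin by simp
  have "(\<Sum>x\<in>F. Phi x) = (\<Sum>x\<in>F. \<Prod>b\<in>Basis. phi1 (\<rho> x b))"
    unfolding Phi_def \<rho>_def by (intro sum.cong prod.cong) auto
  also have "\<dots> = (\<Sum>f\<in>\<rho> ` F. \<Prod>b\<in>Basis. phi1 (f b))" by (simp add: sum.reindex[OF inj])
  also have "\<dots> \<le> (\<Sum>f\<in>PiE Basis T. \<Prod>b\<in>Basis. phi1 (f b))"
    by (intro sum_mono2 finite_PiE finT)
       (auto simp: \<rho>_def T_def prod_nonneg phi1_pos less_imp_le)
  also have "\<dots> = (\<Prod>b\<in>Basis. \<Sum>t\<in>T b. phi1 t)"
    by (rule prod_sum_PiE[symmetric]) (auto simp: finT)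
  also have "\<dots> \<le> (\<Prod>b\<in>Basis. if b \<in> V then 1 else 6*L)"
  proof (rule prod_mono, rule conjI)
    fix b :: 'a assume b: "b \<in> Basis"
    show "0 \<le> (\<Sum>t\<in>T b. phi1 t)" by (simp add: sum_nonneg phi1_pos less_imp_le)
    show "(\<Sum>t\<in>T b. phi1 t) \<le> (if b \<in> V then 1 else 6*L)"
    proof (cases "b \<in> V")
      case True
      hence "T b \<subseteq> {0}" using F unfolding T_def by auto
      hence "(\<Sum>t\<in>T b. phi1 t) \<le> (\<Sum>t\<in>{0}. phi1 t)"
        by (intro sum_mono2) (auto simp: phi1_pos less_imp_le)
      thus ?thesis using True phi1_le1[of 0] by simp
    next
      case False
      have "T b \<subseteq> {t. L*t \<in> \<int>}" using F b unfolding T_def lat_def by auto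
      thus ?thesis using False sum_phi1_lat[OF L finT] by simp
    qed
  qed
  also have "\<dots> = (6*L) ^ card (Basis - V)"
    by (simp add: prod.If_cases Diff_eq)
  finally show ?thesis .
qed

lemma lat_sum:
  fixes V :: "'a::euclidean_space set"
  assumes V: "V \<subseteq> Basis" and L: "L \<ge> 1"
  shows "Phi summable_on {x\<in>lat L. \<forall>b\<in>V. x \<bullet> b = 0}"
    and "infsum Phi {x\<in>lat L. \<forall>b\<in>V. x \<bullet> b = 0} \<le> (6*L) ^ card (Basis - V)"
proof -
  show s: "Phi summable_on {x\<in>lat L. \<forall>b\<in>V. x \<bullet> b = 0}"
    by (rule nonneg_bdd_above_summable_on)
       (auto simp: Phi_pos less_imp_le bdd_above_def intro!: exI[of _ "(6*L) ^ card (Basis - V)"] lat_sum_finite[OF V L])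
  show "infsum Phi {x\<in>lat L. \<forall>b\<in>V. x \<bullet> b = 0} \<le> (6*L) ^ card (Basis - V)"
    by (rule infsum_le_finite_sums[OF s]) (rule lat_sum_finite[OF V L])
qed



lemma dpart_deriv0:
  assumes "has_dpart b f x"
  shows "((\<lambda>t. f (x + t *\<^sub>R b)) has_real_derivative dpart b f x) (at 0)"
  using assms unfolding has_dpart_def dpart_def by (simp add: DERIV_deriv_iff_real_differentiable)

lemma dpart_deriv_at:
  assumes "has_dpart b f (x + t *\<^sub>R b)"
  shows "((\<lambda>s. f (x + s *\<^sub>R b)) has_real_derivative dpart b f (x + t *\<^sub>R b)) (at t)"
proof -
  have "((\<lambda>u. f ((x + t *\<^sub>R b) + u *\<^sub>R b)) has_real_derivative dpart b f (x + t *\<^sub>R b)) (at 0)"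
    by (rule dpart_deriv0[OF assms])
  moreover have "(\<lambda>u. f ((x + t *\<^sub>R b) + u *\<^sub>R b)) = (\<lambda>u. f (x + (u + t) *\<^sub>R b))"
    by (simp add: algebra_simps scaleR_add_left)
  ultimately have "((\<lambda>u. (\<lambda>s. f (x + s *\<^sub>R b)) (u + t)) has_real_derivative dpart b f (x + t *\<^sub>R b)) (at 0)"
    by simp
  thus ?thesis using DERIV_shift[of "\<lambda>s. f (x + s *\<^sub>R b)" _ 0 t] by simp
qed

lemma mvt_bound:
  fixes \<phi> \<phi>' :: "real \<Rightarrow> real"
  assumes der: "\<And>s. \<bar>s\<bar> \<le> \<bar>T\<bar> \<Longrightarrow> (\<phi> has_real_derivative \<phi>' s) (at s)"
    and bd: "\<And>s. \<bar>s\<bar> \<le> \<bar>T\<bar> \<Longrightarrow> \<bar>\<phi>' s\<bar> \<le> M"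
  shows "\<bar>\<phi> T - \<phi> 0\<bar> \<le> M * \<bar>T\<bar>"
proof (cases T "0::real" rule: linorder_cases)
  case less
  have d: "(\<phi> has_real_derivative \<phi>' x) (at x)" if "T \<le> x" "x \<le> 0" for x
  proof (rule der)
    show "\<bar>x\<bar> \<le> \<bar>T\<bar>" using that by arith
  qed
  obtain z where z: "T < z" "z < 0" "\<phi> 0 - \<phi> T = (0 - T) * \<phi>' z"
    using MVT2[OF less d] by blast
  have "\<bar>z\<bar> \<le> \<bar>T\<bar>" using z by arith
  hence "\<bar>\<phi>' z\<bar> \<le> M" by (rule bd)
  hence "\<bar>(0 - T) * \<phi>' z\<bar> \<le> \<bar>T\<bar> * M" by (simp add: abs_mult mult_left_mono)
  thus ?thesis using z(3) by (simp add: abs_minus_commute mult.commute)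
next
  case equal thus ?thesis by simp
next
  case greater
  have d: "(\<phi> has_real_derivative \<phi>' x) (at x)" if "0 \<le> x" "x \<le> T" for x
  proof (rule der)
    show "\<bar>x\<bar> \<le> \<bar>T\<bar>" using that by arith
  qed
  obtain z where z: "0 < z" "z < T" "\<phi> T - \<phi> 0 = (T - 0) * \<phi>' z"
    using MVT2[OF greater d] by blast
  have "\<bar>z\<bar> \<le> \<bar>T\<bar>" using z by arith
  hence "\<bar>\<phi>' z\<bar> \<le> M" by (rule bd)
  hence "\<bar>(T - 0) * \<phi>' z\<bar> \<le> \<bar>T\<bar> * M" by (simp add: abs_mult mult_left_mono)
  thus ?thesis using z(3) by (simp add: mult.commute)
qed

definition pth :: "'a::euclidean_space \<Rightarrow> 'a set \<Rightarrow> 'a" where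
  "pth v S = (\<Sum>c\<in>S. (v \<bullet> c) *\<^sub>R c)"

lemma pth_inner:
  fixes v :: "'a::euclidean_space"
  assumes "S \<subseteq> Basis" "c \<in> Basis"
  shows "pth v S \<bullet> c = (if c \<in> S then v \<bullet> c else 0)"
proof -
  have fin: "finite S" by (rule finite_subset[OF assms(1) finite_Basis])
  have "pth v S \<bullet> c = (\<Sum>e\<in>S. (v \<bullet> e) * (e \<bullet> c))" unfolding pth_def by (simp add: inner_sum_left)
  also have "\<dots> = (\<Sum>e\<in>S. if e = c then v \<bullet> c else 0)"
    using assms by (intro sum.cong) (auto simp: inner_Basis)
  also have "\<dots> = (if c \<in> S then v \<bullet> c else 0)" using fin by (simp add: sum.delta)
  finally show ?thesis .
qed

lemma pth_Basis: "pth v Basis = v" unfolding pth_def by (rule euclidean_representation)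

lemma pth_insert: "finite S \<Longrightarrow> b \<notin> S \<Longrightarrow> pth v (insert b S) = pth v S + (v \<bullet> b) *\<^sub>R b"
  unfolding pth_def by simp

lemma sum_abs_pth_plus:
  fixes v :: "'a::euclidean_space"
  assumes S: "S \<subseteq> Basis" and b: "b \<in> Basis"
  shows "(\<Sum>c\<in>Basis. \<bar>(pth v S + s *\<^sub>R b) \<bullet> c\<bar>) \<le> (\<Sum>c\<in>S. \<bar>v \<bullet> c\<bar>) + \<bar>s\<bar>"
proof -
  have "(\<Sum>c\<in>Basis. \<bar>(pth v S + s *\<^sub>R b) \<bullet> c\<bar>) \<le> (\<Sum>c\<in>Basis. (if c \<in> S then \<bar>v \<bullet> c\<bar> else 0) + (if c = b then \<bar>s\<bar> else 0))"
    using S b by (intro sum_mono) (auto simp: inner_add_left pth_inner inner_Basis)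
  also have "\<dots> = (\<Sum>c\<in>S. \<bar>v \<bullet> c\<bar>) + \<bar>s\<bar>"
    using S b by (simp add: sum.distrib sum.If_cases Int_absorb1 sum.delta)
  finally show ?thesis .
qed

lemma pth_coord_bound:
  fixes v :: "'a::euclidean_space"
  assumes S: "S \<subseteq> Basis" and b: "b \<in> Basis" "b \<notin> S"
    and v: "\<forall>c\<in>Basis. \<bar>v \<bullet> c\<bar> \<le> r" and s: "\<bar>s\<bar> \<le> \<bar>v \<bullet> b\<bar>"
  shows "\<forall>c\<in>Basis. \<bar>(pth v S + s *\<^sub>R b) \<bullet> c\<bar> \<le> r"
proof
  fix c :: 'a assume c: "c \<in> Basis"
  have e: "(pth v S + s *\<^sub>R b) \<bullet> c = (if c \<in> S then v \<bullet> c else 0) + (if c = b then s else 0)"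
    using S b c by (simp add: inner_add_left pth_inner inner_Basis)
  have vc: "\<bar>v \<bullet> c\<bar> \<le> r" using v c by blast
  have r0: "0 \<le> r" using vc by (metis abs_ge_zero order.trans)
  have vb: "\<bar>v \<bullet> b\<bar> \<le> r" using v b by blast
  show "\<bar>(pth v S + s *\<^sub>R b) \<bullet> c\<bar> \<le> r"
    unfolding e using b(2) vc r0 vb s by auto
qed

lemma fo_bound:
  fixes f :: "'a::euclidean_space \<Rightarrow> real"
  assumes hd: "\<forall>b\<in>Basis. \<forall>x. has_dpart b f x"
    and bd: "\<forall>b\<in>Basis. \<forall>x. (\<forall>c\<in>Basis. \<bar>(x - z) \<bullet> c\<bar> \<le> r) \<longrightarrow> \<bar>dpart b f x\<bar> \<le> M"
    and v: "\<forall>c\<in>Basis. \<bar>v \<bullet> c\<bar> \<le> r"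
  shows "\<bar>f (z + v) - f z\<bar> \<le> M * (\<Sum>c\<in>Basis. \<bar>v \<bullet> c\<bar>)"
proof -
  have "S \<subseteq> Basis \<Longrightarrow> \<bar>f (z + pth v S) - f z\<bar> \<le> M * (\<Sum>c\<in>S. \<bar>v \<bullet> c\<bar>)" for S
  proof (induction S rule: infinite_finite_induct)
    case (infinite S)
    then show ?case using finite_subset[OF _ finite_Basis] by blast
  next
    case empty
    then show ?case by (simp add: pth_def)
  next
    case (insert b S)
    have S: "S \<subseteq> Basis" and b: "b \<in> Basis" using insert by auto
    define y where "y = z + pth v S"
    have "\<bar>f (y + (v \<bullet> b) *\<^sub>R b) - f (y + 0 *\<^sub>R b)\<bar> \<le> M * \<bar>v \<bullet> b\<bar>"
    proof (rule mvt_bound[where \<phi>="\<lambda>s. f (y + s *\<^sub>R b)" and \<phi>'="\<lambda>s. dpart b f (y + s *\<^sub>R b)"])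
      fix s assume s: "\<bar>s\<bar> \<le> \<bar>v \<bullet> b\<bar>"
      show "((\<lambda>s. f (y + s *\<^sub>R b)) has_real_derivative dpart b f (y + s *\<^sub>R b)) (at s)"
        using hd b by (intro dpart_deriv_at) auto
      have "\<forall>c\<in>Basis. \<bar>(y + s *\<^sub>R b - z) \<bullet> c\<bar> \<le> r"
        using pth_coord_bound[OF S b insert(2) v s] unfolding y_def by (simp add: algebra_simps)
      thus "\<bar>dpart b f (y + s *\<^sub>R b)\<bar> \<le> M" using bd b by blast
    qed
    hence 1: "\<bar>f (z + pth v (insert b S)) - f y\<bar> \<le> M * \<bar>v \<bullet> b\<bar>"
      using insert(1,2) by (simp add: pth_insert y_def add.assoc)
    have 2: "\<bar>f y - f z\<bar> \<le> M * (\<Sum>c\<in>S. \<bar>v \<bullet> c\<bar>)" using insert S unfolding y_def by blast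
    have "\<bar>f (z + pth v (insert b S)) - f z\<bar> \<le> M * \<bar>v \<bullet> b\<bar> + M * (\<Sum>c\<in>S. \<bar>v \<bullet> c\<bar>)"
      using 1 2 by linarith
    also have "\<dots> = M * (\<Sum>c\<in>insert b S. \<bar>v \<bullet> c\<bar>)" using insert(1,2) by (simp add: distrib_left)
    finally show ?case .
  qed
  from this[of Basis] show ?thesis by (simp add: pth_Basis)
qed

lemma so_bound:
  fixes f :: "'a::euclidean_space \<Rightarrow> real"
  assumes hd1: "\<forall>b\<in>Basis. \<forall>x. has_dpart b f x"
    and hd2: "\<forall>b\<in>Basis. \<forall>c\<in>Basis. \<forall>x. has_dpart c (dpart b f) x"
    and bd: "\<forall>b\<in>Basis. \<forall>c\<in>Basis. \<forall>x. (\<forall>e\<in>Basis. \<bar>(x - z) \<bullet> e\<bar> \<le> r) \<longrightarrow> \<bar>dpart c (dpart b f) x\<bar> \<le> M"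
    and v: "\<forall>c\<in>Basis. \<bar>v \<bullet> c\<bar> \<le> r" and M: "0 \<le> M"
  shows "\<bar>f (z + v) - f z - (\<Sum>b\<in>Basis. (v \<bullet> b) * dpart b f z)\<bar> \<le> M * (\<Sum>c\<in>Basis. \<bar>v \<bullet> c\<bar>)\<^sup>2"
proof -
  have "S \<subseteq> Basis \<Longrightarrow> \<bar>f (z + pth v S) - f z - (\<Sum>b\<in>S. (v \<bullet> b) * dpart b f z)\<bar> \<le> M * (\<Sum>c\<in>S. \<bar>v \<bullet> c\<bar>)\<^sup>2" for S
  proof (induction S rule: infinite_finite_induct)
    case (infinite S)
    then show ?case using finite_subset[OF _ finite_Basis] by blast
  next
    case empty
    then show ?case by (simp add: pth_def)
  next
    case (insert b S)
    have S: "S \<subseteq> Basis" and b: "b \<in> Basis" using insert by auto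
    define y where "y = z + pth v S"
    define A where "A = (\<Sum>c\<in>S. \<bar>v \<bullet> c\<bar>)"
    define D where "D = dpart b f z"
    have A0: "0 \<le> A" unfolding A_def by (simp add: sum_nonneg)
    have "\<bar>(f (y + (v \<bullet> b) *\<^sub>R b) - (v \<bullet> b) * D) - (f (y + 0 *\<^sub>R b) - 0 * D)\<bar> \<le> (M * (A + \<bar>v \<bullet> b\<bar>)) * \<bar>v \<bullet> b\<bar>"
    proof (rule mvt_bound[where \<phi>="\<lambda>s. f (y + s *\<^sub>R b) - s * D" and \<phi>'="\<lambda>s. dpart b f (y + s *\<^sub>R b) - D"])
      fix s assume s: "\<bar>s\<bar> \<le> \<bar>v \<bullet> b\<bar>"
      have "((\<lambda>s. f (y + s *\<^sub>R b)) has_real_derivative dpart b f (y + s *\<^sub>R b)) (at s)"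
        using hd1 b by (intro dpart_deriv_at) auto
      then show "((\<lambda>s. f (y + s *\<^sub>R b) - s * D) has_real_derivative dpart b f (y + s *\<^sub>R b) - D) (at s)"
        by (auto intro!: derivative_eq_intros)
      define w where "w = pth v S + s *\<^sub>R b"
      have wr: "\<forall>c\<in>Basis. \<bar>w \<bullet> c\<bar> \<le> r" unfolding w_def by (rule pth_coord_bound[OF S b insert(2) v s])
      have "\<bar>dpart b f (z + w) - dpart b f z\<bar> \<le> M * (\<Sum>c\<in>Basis. \<bar>w \<bullet> c\<bar>)"
      proof (rule fo_bound[OF _ _ wr])
        show "\<forall>c\<in>Basis. \<forall>x. has_dpart c (dpart b f) x" using hd2 b by blast
        show "\<forall>c\<in>Basis. \<forall>x. (\<forall>e\<in>Basis. \<bar>(x - z) \<bullet> e\<bar> \<le> r) \<longrightarrow> \<bar>dpart c (dpart b f) x\<bar> \<le> M"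
          using bd b by blast
      qed
      also have "\<dots> \<le> M * (A + \<bar>s\<bar>)" unfolding w_def A_def
        using sum_abs_pth_plus[OF S b] M by (intro mult_left_mono) auto
      also have "\<dots> \<le> M * (A + \<bar>v \<bullet> b\<bar>)" using s M by (intro mult_left_mono) auto
      finally show "\<bar>dpart b f (y + s *\<^sub>R b) - D\<bar> \<le> M * (A + \<bar>v \<bullet> b\<bar>)"
        unfolding y_def w_def D_def by (simp add: add.assoc)
    qed
    hence 1: "\<bar>f (z + pth v (insert b S)) - f y - (v \<bullet> b) * D\<bar> \<le> M * (A + \<bar>v \<bullet> b\<bar>) * \<bar>v \<bullet> b\<bar>"
      using insert(1,2) by (simp add: pth_insert y_def add.assoc algebra_simps)
    have 2: "\<bar>f y - f z - (\<Sum>b\<in>S. (v \<bullet> b) * dpart b f z)\<bar> \<le> M * A\<^sup>2"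
      using insert S unfolding y_def A_def by blast
    have 3: "M * (A + \<bar>v \<bullet> b\<bar>) * \<bar>v \<bullet> b\<bar> + M * A\<^sup>2 \<le> M * (A + \<bar>v \<bullet> b\<bar>)\<^sup>2"
    proof -
      have "(A + \<bar>v \<bullet> b\<bar>) * \<bar>v \<bullet> b\<bar> + A\<^sup>2 \<le> (A + \<bar>v \<bullet> b\<bar>)\<^sup>2"
        using A0 by (simp add: power2_eq_square algebra_simps)
      hence "M * ((A + \<bar>v \<bullet> b\<bar>) * \<bar>v \<bullet> b\<bar> + A\<^sup>2) \<le> M * (A + \<bar>v \<bullet> b\<bar>)\<^sup>2" using M by (rule mult_left_mono)
      thus ?thesis by (simp add: algebra_simps)
    qed
    have "\<bar>f (z + pth v (insert b S)) - f z - (\<Sum>b\<in>insert b S. (v \<bullet> b) * dpart b f z)\<bar>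
        = \<bar>(f (z + pth v (insert b S)) - f y - (v \<bullet> b) * D) + (f y - f z - (\<Sum>b\<in>S. (v \<bullet> b) * dpart b f z))\<bar>"
      using insert(1,2) by (simp add: D_def algebra_simps)
    also have "\<dots> \<le> M * (A + \<bar>v \<bullet> b\<bar>) * \<bar>v \<bullet> b\<bar> + M * A\<^sup>2"
      using 1 2 abs_triangle_ineq[of "f (z + pth v (insert b S)) - f y - (v \<bullet> b) * D" "f y - f z - (\<Sum>b\<in>S. (v \<bullet> b) * dpart b f z)"] by linarith
    also have "\<dots> \<le> M * (A + \<bar>v \<bullet> b\<bar>)\<^sup>2" by (rule 3)
    also have "\<dots> = M * (\<Sum>c\<in>insert b S. \<bar>v \<bullet> c\<bar>)\<^sup>2" using insert(1,2) by (simp add: A_def add.commute)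
    finally show ?case .
  qed
  from this[of Basis] show ?thesis by (simp add: pth_Basis)
qed

lemma sum_abs_inner_le:
  fixes v :: "'a::euclidean_space"
  shows "(\<Sum>c\<in>Basis. \<bar>v \<bullet> c\<bar>) \<le> real DIM('a) * norm v"
proof -
  have "(\<Sum>c\<in>Basis. \<bar>v \<bullet> c\<bar>) \<le> (\<Sum>c\<in>(Basis::'a set). norm v)" by (intro sum_mono Basis_le_norm)
  thus ?thesis by simp
qed

lemma dpart_lipschitz_cont:
  fixes f :: "'a::euclidean_space \<Rightarrow> real"
  assumes hd: "\<forall>b\<in>Basis. \<forall>x. has_dpart b f x"
    and bd: "\<forall>b\<in>Basis. \<forall>x. \<bar>dpart b f x\<bar> \<le> M" and M: "0 \<le> M"
  shows "continuous_on UNIV f"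
proof (rule lipschitz_on_continuous_on)
  show "(M * real DIM('a))-lipschitz_on UNIV f"
  proof (rule lipschitz_onI)
    fix x y :: 'a
    have "\<bar>f (y + (x - y)) - f y\<bar> \<le> M * (\<Sum>c\<in>Basis. \<bar>(x - y) \<bullet> c\<bar>)"
      by (rule fo_bound[OF hd, where r="norm (x - y)"]) (use bd Basis_le_norm in auto)
    also have "\<dots> \<le> M * (real DIM('a) * norm (x - y))" using M by (intro mult_left_mono sum_abs_inner_le)
    finally show "dist (f x) (f y) \<le> M * real DIM('a) * dist x y" by (simp add: dist_norm dist_real_def mult.assoc)
  qed (use M in simp)
qed



lemma C2_funD:
  assumes "C2_fun g"
  shows "\<forall>b\<in>Basis. \<forall>x. has_dpart b g x" "\<forall>b\<in>Basis. \<forall>c\<in>Basis. \<forall>x. has_dpart c (dpart b g) x"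
  using assms unfolding C2_fun_def by auto

lemma reflect_cbox_image:
  fixes z :: "'a::euclidean_space"
  shows "(\<lambda>x. (1 / (-1::real)) *\<^sub>R x + - ((1 / (-1::real)) *\<^sub>R (2 *\<^sub>R z))) ` cbox (z - a) (z + a) = cbox (z - a) (z + a)"
proof -
  have e: "(\<lambda>x. (1 / (-1::real)) *\<^sub>R x + - ((1 / (-1::real)) *\<^sub>R (2 *\<^sub>R z))) = (\<lambda>x. 2 *\<^sub>R z - x)"
    by (simp add: fun_eq_iff)
  have mem: "2 *\<^sub>R z - x \<in> cbox (z - a) (z + a)" if "x \<in> cbox (z - a) (z + a)" for x
    using that by (auto simp: mem_box inner_diff_left inner_add_left algebra_simps)
  show ?thesis unfolding e
  proof (intro equalityI subsetI)
    fix x assume "x \<in> (\<lambda>x. 2 *\<^sub>R z - x) ` cbox (z - a) (z + a)"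
    then show "x \<in> cbox (z - a) (z + a)" using mem by auto
  next
    fix x assume x: "x \<in> cbox (z - a) (z + a)"
    have "x = 2 *\<^sub>R z - (2 *\<^sub>R z - x)" by simp
    then show "x \<in> (\<lambda>x. 2 *\<^sub>R z - x) ` cbox (z - a) (z + a)" using mem[OF x] by blast
  qed
qed

lemma cell_est:
  fixes g :: "'a::euclidean_space \<Rightarrow> real"
  assumes C2: "C2_fun g" and cont: "continuous_on UNIV g"
    and h: "0 < h" "h \<le> 1" and M: "0 \<le> M"
    and bdM: "\<forall>b\<in>Basis. \<forall>c\<in>Basis. \<forall>x. (\<forall>e\<in>Basis. \<bar>(x - z) \<bullet> e\<bar> \<le> 1/2) \<longrightarrow> \<bar>dpart c (dpart b g) x\<bar> \<le> M"
  shows "\<bar>integral (cbox (z - (h/2) *\<^sub>R One) (z + (h/2) *\<^sub>R One)) g - h ^ DIM('a) * g z\<bar>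
           \<le> M * (real DIM('a))\<^sup>2 * h ^ (DIM('a) + 2) / 4"
proof -
  define a :: 'a where "a = (h/2) *\<^sub>R One"
  define C where "C = cbox (z - a) (z + a)"
  define n where "n = real DIM('a)"
  define I where "I = integral C g"
  note hd = C2_funD[OF C2]
  have gI: "(g has_integral I) C" unfolding I_def C_def
    by (rule integrable_integral, rule integrable_continuous, rule continuous_on_subset[OF cont]) auto
  have gR: "((\<lambda>x. g (2 *\<^sub>R z - x)) has_integral I) C"
  proof -
    have "((\<lambda>x. g ((-1) *\<^sub>R x + 2 *\<^sub>R z)) has_integral (1 / (\<bar>-1::real\<bar> ^ DIM('a))) *\<^sub>R I)
           ((\<lambda>x. (1 / (-1::real)) *\<^sub>R x + - ((1 / (-1::real)) *\<^sub>R (2 *\<^sub>R z))) ` C)"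
      using gI unfolding C_def by (intro has_integral_affinity) auto
    thus ?thesis unfolding C_def reflect_cbox_image by simp
  qed
  have cont_C: "Henstock_Kurzweil_Integration.content C = h ^ DIM('a)"
    unfolding C_def a_def using h by (subst content_cbox) (auto simp: inner_diff_left inner_add_left)
  have all: "((\<lambda>x. g x + g (2 *\<^sub>R z - x) - 2 * g z) has_integral (I + I - Henstock_Kurzweil_Integration.content C *\<^sub>R (2 * g z))) C"
    unfolding C_def by (intro has_integral_diff has_integral_add has_integral_const gI[unfolded C_def] gR[unfolded C_def])
  have pt: "norm (g x + g (2 *\<^sub>R z - x) - 2 * g z) \<le> M * n\<^sup>2 * h\<^sup>2 / 2" if x: "x \<in> C" for x
  proof -
    define y where "y = x - z"
    have yc: "\<bar>y \<bullet> c\<bar> \<le> h/2" if "c \<in> Basis" for c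
    proof -
    have "z \<bullet> c - h/2 \<le> x \<bullet> c" "x \<bullet> c \<le> z \<bullet> c + h/2"
      using x that unfolding C_def a_def by (auto simp: mem_box inner_diff_left inner_add_left)
    thus ?thesis unfolding y_def inner_diff_left by arith
  qed
    have y12: "\<forall>c\<in>Basis. \<bar>y \<bullet> c\<bar> \<le> 1/2" using yc h by force
    have my12: "\<forall>c\<in>Basis. \<bar>(-y) \<bullet> c\<bar> \<le> 1/2" using y12 by simp
    have sy: "(\<Sum>c\<in>Basis. \<bar>y \<bullet> c\<bar>) \<le> n * (h/2)"
    proof -
      have "(\<Sum>c\<in>Basis. \<bar>y \<bullet> c\<bar>) \<le> (\<Sum>c\<in>(Basis::'a set). h/2)" using yc by (intro sum_mono) auto
      thus ?thesis unfolding n_def by simp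
    qed
    have sq: "(\<Sum>c\<in>Basis. \<bar>y \<bullet> c\<bar>)\<^sup>2 \<le> (n * (h/2))\<^sup>2"
      using sy by (intro power_mono) (auto simp: sum_nonneg)
    define Lin where "Lin = (\<Sum>b\<in>Basis. (y \<bullet> b) * dpart b g z)"
    have b1: "\<bar>g (z + y) - g z - Lin\<bar> \<le> M * (\<Sum>c\<in>Basis. \<bar>y \<bullet> c\<bar>)\<^sup>2"
      unfolding Lin_def by (rule so_bound[OF hd(1) hd(2) bdM y12 M])
    have b2: "\<bar>g (z + (-y)) - g z - (\<Sum>b\<in>Basis. ((-y) \<bullet> b) * dpart b g z)\<bar> \<le> M * (\<Sum>c\<in>Basis. \<bar>(-y) \<bullet> c\<bar>)\<^sup>2"
      by (rule so_bound[OF hd(1) hd(2) bdM my12 M])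
    have b2': "\<bar>g (z - y) - g z + Lin\<bar> \<le> M * (\<Sum>c\<in>Basis. \<bar>y \<bullet> c\<bar>)\<^sup>2"
      using b2 unfolding Lin_def by (simp add: sum_negf)
    have "\<bar>g x + g (2 *\<^sub>R z - x) - 2 * g z\<bar> = \<bar>(g (z + y) - g z - Lin) + (g (z - y) - g z + Lin)\<bar>"
      unfolding y_def by (simp add: algebra_simps scaleR_2)
    also have "\<dots> \<le> 2 * (M * (\<Sum>c\<in>Basis. \<bar>y \<bullet> c\<bar>)\<^sup>2)"
      using b1 b2' abs_triangle_ineq[of "g (z + y) - g z - Lin" "g (z - y) - g z + Lin"] by linarith
    also have "\<dots> \<le> 2 * (M * (n * (h/2))\<^sup>2)" using sq M by (intro mult_left_mono) auto
    also have "\<dots> = M * n\<^sup>2 * h\<^sup>2 / 2" by (simp add: power2_eq_square)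
    finally show ?thesis by simp
  qed
  have "norm (I + I - Henstock_Kurzweil_Integration.content C *\<^sub>R (2 * g z)) \<le> (M * n\<^sup>2 * h\<^sup>2 / 2) * Henstock_Kurzweil_Integration.content C"
    unfolding C_def by (rule has_integral_bound[OF _ all[unfolded C_def]]) (use M pt in \<open>auto simp: C_def\<close>)
  moreover have "I + I - Henstock_Kurzweil_Integration.content C *\<^sub>R (2 * g z) = 2 * (I - h ^ DIM('a) * g z)"
    unfolding cont_C by (simp add: algebra_simps)
  ultimately have "norm (2 * (I - h ^ DIM('a) * g z)) \<le> (M * n\<^sup>2 * h\<^sup>2 / 2) * h ^ DIM('a)"
    unfolding cont_C by (simp add: mult_ac)
  hence "2 * \<bar>I - h ^ DIM('a) * g z\<bar> \<le> (M * n\<^sup>2 * h\<^sup>2 / 2) * h ^ DIM('a)"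
    by (simp only: real_norm_def abs_mult)
  moreover define Q where "Q = M * n\<^sup>2 * h\<^sup>2 * h ^ DIM('a)"
  moreover define X where "X = \<bar>I - h ^ DIM('a) * g z\<bar>"
  ultimately have "2 * X \<le> Q / 2" by (simp add: Q_def X_def)
  hence "\<bar>I - h ^ DIM('a) * g z\<bar> \<le> Q / 4" unfolding X_def[symmetric] by linarith
  moreover have "Q = M * (real DIM('a))\<^sup>2 * h ^ (DIM('a) + 2)"
    unfolding Q_def n_def by (simp add: power_add mult_ac power2_eq_square)
  ultimately show ?thesis unfolding I_def C_def a_def by simp
qed



lemma phi1_cont: "continuous_on UNIV phi1"
  unfolding phi1_def[abs_def] by (intro continuous_intros) (simp add: add_nonneg_eq_0_iff)

lemma Phi_cont: "continuous_on UNIV (Phi :: 'a::euclidean_space \<Rightarrow> real)"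
  unfolding Phi_def[abs_def]
  by (intro continuous_intros continuous_on_compose2[OF phi1_cont]) auto

lemma phi1_integrable: "integrable lborel phi1"
proof -
  have "einterval (-\<infinity>) \<infinity> = (UNIV :: real set)" by (auto simp: einterval_iff)
  hence "set_integrable lborel UNIV (\<lambda>x::real. inverse (1 + x^2))"
    using integrable_inverse_1_plus_square by simp
  hence "integrable lborel (\<lambda>x::real. inverse (1 + x^2))" unfolding set_integrable_def by simp
  moreover have "(\<lambda>x::real. inverse (1 + x^2)) = phi1" by (simp add: fun_eq_iff phi1_def divide_inverse)
  ultimately show ?thesis by simp
qed

lemma Phi_integrable: "integrable lborel (Phi :: 'a::euclidean_space \<Rightarrow> real)"
proof (rule integrableI_nonneg)
  have "(Phi :: 'a \<Rightarrow> real) \<in> borel_measurable borel" by (rule borel_measurable_continuous_onI[OF Phi_cont])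
  thus "(Phi :: 'a \<Rightarrow> real) \<in> borel_measurable lborel" by simp
  show "AE x in lborel. 0 \<le> (Phi :: 'a \<Rightarrow> real) x" by (simp add: Phi_pos less_imp_le)
  have fin1: "(\<integral>\<^sup>+x. ennreal (phi1 x) \<partial>lborel) < \<infinity>"
    using integrableD(2)[OF phi1_integrable] by (simp add: top.not_eq_extremum)
  have m: "phi1 \<in> borel_measurable borel" using phi1_cont by (rule borel_measurable_continuous_onI)
  have "(\<integral>\<^sup>+x. ennreal (Phi (x::'a)) \<partial>lborel) = (\<integral>\<^sup>+x. (\<Prod>b\<in>(Basis::'a set). ennreal (phi1 (x \<bullet> b))) \<partial>lborel)"
    unfolding Phi_def by (subst prod_ennreal[symmetric]) (auto simp: phi1_pos less_imp_le)
  also have "\<dots> = (\<Prod>b\<in>(Basis::'a set). (\<integral>\<^sup>+x. ennreal (phi1 x) \<partial>lborel))"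
    by (rule nn_integral_lborel_prod) (use m in auto)
  also have "\<dots> < \<infinity>" using fin1 by (simp add: power_less_top_ennreal)
  finally show "(\<integral>\<^sup>+x. ennreal (Phi x) \<partial>(lborel :: 'a measure)) < \<infinity>" .
qed

lemma lat_countable: "L \<noteq> 0 \<Longrightarrow> countable (lat L :: 'a::euclidean_space set)"
proof -
  define \<Psi> where "\<Psi> f = (\<Sum>b\<in>Basis. (f b / L) *\<^sub>R b)" for f :: "'a \<Rightarrow> real"
  assume L: "L \<noteq> 0"
  have "lat L \<subseteq> \<Psi> ` (PiE Basis (\<lambda>_. \<int>))"
  proof
    fix x :: 'a assume x: "x \<in> lat L"
    have "x = \<Psi> (restrict (\<lambda>b. L * (x \<bullet> b)) Basis)"
      unfolding \<Psi>_def using L by (simp add: euclidean_representation)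
    moreover have "restrict (\<lambda>b. L * (x \<bullet> b)) Basis \<in> PiE Basis (\<lambda>_. \<int>)" using x by (auto simp: lat_def)
    ultimately show "x \<in> \<Psi> ` (PiE Basis (\<lambda>_. \<int>))" by blast
  qed
  moreover have "countable (\<Psi> ` (PiE Basis (\<lambda>_. \<int>)))"
    by (intro countable_image countable_PiE) (auto simp: countable_int)
  ultimately show ?thesis by (rule countable_subset)
qed

lemma lat_infinite: "infinite (lat L :: 'a::euclidean_space set)"
proof
  assume fin: "finite (lat L :: 'a set)"
  obtain b :: 'a where b: "b \<in> Basis" using nonempty_Basis by blast
  define f where "f n = (if L = 0 then real n else real n / L) *\<^sub>R b" for n :: nat
  have "inj f" unfolding f_def by (rule injI) (use b in \<open>auto split: if_splits simp: nonzero_Basis\<close>)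
  moreover have "range f \<subseteq> lat L" unfolding f_def lat_def using b by (auto simp: inner_Basis)
  ultimately have "infinite (lat L :: 'a set)" by (meson finite_subset infinite_iff_countable_subset)
  with fin show False by simp
qed

lemma lat_full: "{x\<in>lat L. \<forall>b\<in>{}. x \<bullet> b = 0} = lat L" by simp

lemma lat_bound:
  fixes f :: "'a::euclidean_space \<Rightarrow> real"
  assumes L: "L \<ge> 1" and c: "0 \<le> c" and fb: "\<And>x. x \<in> lat L \<Longrightarrow> \<bar>f x\<bar> \<le> c * Phi x"
  shows "f summable_on lat L" "(\<lambda>x. \<bar>f x\<bar>) summable_on lat L"
    "\<bar>infsum f (lat L)\<bar> \<le> c * (6*L) ^ DIM('a)"
proof -
  have sP: "Phi summable_on (lat L :: 'a set)" using lat_sum(1)[of "{}" L] L by simp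
  have iP: "infsum Phi (lat L :: 'a set) \<le> (6*L) ^ DIM('a)" using lat_sum(2)[of "{}" L] L by simp
  have scP: "(\<lambda>x. c * Phi x) summable_on (lat L :: 'a set)" using sP by (rule summable_on_cmult_right)
  have sn: "(\<lambda>x. norm (f x)) summable_on lat L"
    by (rule Infinite_Sum.abs_summable_on_comparison_test'[OF scP]) (use fb in simp)
  thus sa: "(\<lambda>x. \<bar>f x\<bar>) summable_on lat L" by (simp add: real_norm_def)
  show sf: "f summable_on lat L" using sn summable_on_iff_abs_summable_on_real by blast
  have 1: "\<bar>infsum f (lat L)\<bar> \<le> infsum (\<lambda>x. \<bar>f x\<bar>) (lat L)"
    using norm_infsum_bound[of f "lat L"] sn by (simp add: real_norm_def)
  have 2: "infsum (\<lambda>x. \<bar>f x\<bar>) (lat L) \<le> infsum (\<lambda>x. c * Phi x) (lat L :: 'a set)"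
    using sa scP fb by (rule infsum_mono)
  have 3: "infsum (\<lambda>x. c * Phi x) (lat L :: 'a set) = c * infsum Phi (lat L :: 'a set)" by (rule infsum_cmult_right') 
  have 4: "c * infsum Phi (lat L :: 'a set) \<le> c * (6*L) ^ DIM('a)" using iP c by (rule mult_left_mono)
  show "\<bar>infsum f (lat L)\<bar> \<le> c * (6*L) ^ DIM('a)" using 1 2 3 4 by linarith
qed

definition cellH :: "real \<Rightarrow> 'a::euclidean_space \<Rightarrow> 'a set" where
  "cellH h z = {x. \<forall>b\<in>Basis. z \<bullet> b - h/2 \<le> x \<bullet> b \<and> x \<bullet> b < z \<bullet> b + h/2}"

lemma cellH_cover:
  fixes x :: "'a::euclidean_space"
  assumes L: "L > 0"
  shows "\<exists>z\<in>lat L. x \<in> cellH (1/L) z"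
proof -
  define k where "k b = \<lfloor>L * (x \<bullet> b) + 1/2\<rfloor>" for b :: 'a
  define z where "z = (\<Sum>b\<in>Basis. (of_int (k b) / L) *\<^sub>R b)"
  have zb: "z \<bullet> b = of_int (k b) / L" if "b \<in> Basis" for b
    unfolding z_def using that by (simp add: inner_sum_left inner_Basis if_distrib sum.delta cong: if_cong)
  have "z \<in> lat L" unfolding lat_def using zb L by auto
  moreover have "x \<in> cellH (1/L) z"
    unfolding cellH_def
  proof (intro CollectI ballI conjI)
    fix b :: 'a assume b: "b \<in> Basis"
    have f1: "of_int (k b) \<le> L * (x \<bullet> b) + 1/2" "L * (x \<bullet> b) + 1/2 < of_int (k b) + 1"
      unfolding k_def by linarith+
    show "z \<bullet> b - 1 / L / 2 \<le> x \<bullet> b" using f1 L unfolding zb[OF b] by (simp add: field_simps)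
    show "x \<bullet> b < z \<bullet> b + 1 / L / 2" using f1 L unfolding zb[OF b] by (simp add: field_simps)
  qed
  ultimately show ?thesis by blast
qed

lemma cellH_disjoint:
  fixes z z' :: "'a::euclidean_space"
  assumes L: "L > 0" and z: "z \<in> lat L" "z' \<in> lat L" and x: "x \<in> cellH (1/L) z" "x \<in> cellH (1/L) z'"
  shows "z = z'"
proof (rule euclidean_eqI)
  fix b :: 'a assume b: "b \<in> Basis"
  have i: "L * (z \<bullet> b) \<in> \<int>" "L * (z' \<bullet> b) \<in> \<int>" using z b unfolding lat_def by auto
  have "z \<bullet> b - 1/L/2 \<le> x \<bullet> b" "x \<bullet> b < z \<bullet> b + 1/L/2"
       "z' \<bullet> b - 1/L/2 \<le> x \<bullet> b" "x \<bullet> b < z' \<bullet> b + 1/L/2"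
    using x b unfolding cellH_def by auto
  hence "\<bar>L * (z \<bullet> b) - L * (z' \<bullet> b)\<bar> < 1" using L by (simp add: field_simps abs_less_iff)
  moreover have "L * (z \<bullet> b) - L * (z' \<bullet> b) \<in> \<int>" using i by (rule Ints_diff)
  moreover obtain k where k: "L * (z \<bullet> b) - L * (z' \<bullet> b) = of_int k"
    using \<open>L * (z \<bullet> b) - L * (z' \<bullet> b) \<in> \<int>\<close> by (auto elim: Ints_cases)
  ultimately have "\<bar>of_int k\<bar> < (1::real)" by simp
  hence "\<bar>k\<bar> < 1" by (metis of_int_abs of_int_less_1_iff)
  hence "k = 0" by simp
  hence "L * (z \<bullet> b) - L * (z' \<bullet> b) = 0" using k by simp
  thus "z \<bullet> b = z' \<bullet> b" using L by simp
qed

lemma cellH_sets: "cellH h z \<in> sets lborel"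
proof -
  have "cellH h z = (\<Inter>b\<in>Basis. {x. z \<bullet> b - h/2 \<le> x \<bullet> b} \<inter> {x. x \<bullet> b < z \<bullet> b + h/2})"
    unfolding cellH_def by auto
  also have "\<dots> \<in> sets lborel"
    by (intro sets.finite_INT sets.Int borel_closed borel_open closed_halfspace_component_ge open_halfspace_component_lt) auto
  finally show ?thesis .
qed

lemma cellH_sub: "0 \<le> h \<Longrightarrow> cellH h z \<subseteq> cbox (z - (h/2) *\<^sub>R One) (z + (h/2) *\<^sub>R One)"
  unfolding cellH_def by (auto simp: mem_box inner_diff_left inner_add_left less_imp_le)

lemma cellH_diff_negligible:
  fixes z :: "'a::euclidean_space"
  shows "negligible (cbox (z - (h/2) *\<^sub>R One) (z + (h/2) *\<^sub>R One) - cellH h z)"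
proof -
  have "cbox (z - (h/2) *\<^sub>R One) (z + (h/2) *\<^sub>R One) - cellH h z \<subseteq> (\<Union>b\<in>Basis. {x. b \<bullet> x = z \<bullet> b + h/2})"
  proof
    fix x assume x: "x \<in> cbox (z - (h/2) *\<^sub>R One) (z + (h/2) *\<^sub>R One) - cellH h z"
    then obtain b :: 'a where b: "b \<in> Basis" "\<not> (z \<bullet> b - h/2 \<le> x \<bullet> b \<and> x \<bullet> b < z \<bullet> b + h/2)"
      unfolding cellH_def by auto
    have "z \<bullet> b - h/2 \<le> x \<bullet> b" "x \<bullet> b \<le> z \<bullet> b + h/2"
      using x b(1) by (auto simp: mem_box inner_diff_left inner_add_left)
    hence "b \<bullet> x = z \<bullet> b + h/2" using b(2) by (simp add: inner_commute)
    thus "x \<in> (\<Union>b\<in>Basis. {x. b \<bullet> x = z \<bullet> b + h/2})" using b(1) by blast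
  qed
  moreover have "negligible (\<Union>b\<in>Basis. {x::'a. b \<bullet> x = z \<bullet> b + h/2})"
    by (intro negligible_Union finite_imageI) (auto intro!: negligible_hyperplane simp: nonzero_Basis)
  ultimately show ?thesis by (rule negligible_subset[rotated])
qed



lemma core:
  fixes g :: "'a::euclidean_space \<Rightarrow> real"
  assumes L: "L \<ge> 1" and C2: "C2_fun g" and cont: "continuous_on UNIV g"
    and gb: "\<forall>x. \<bar>g x\<bar> \<le> A * Phi x"
    and bd2: "\<forall>b\<in>Basis. \<forall>c\<in>Basis. \<forall>x. \<bar>dpart c (dpart b g) x\<bar> \<le> B * Phi x" and B: "0 \<le> B"
  shows "integrable lborel g" "g summable_on lat L"
    "\<bar>(\<integral>x. g x \<partial>lborel) - (1/L) ^ DIM('a) * infsum g (lat L)\<bar>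
       \<le> B * 15 ^ DIM('a) * (real DIM('a))\<^sup>2 / L\<^sup>2"
proof -
  define h where "h = 1/L"
  define n where "n = DIM('a)"
  have Lpos: "L > 0" using L by simp
  have h: "0 < h" "h \<le> 1" unfolding h_def using L by auto
  have A0: "0 \<le> A"
  proof -
    have "0 \<le> A * Phi (0::'a)" using gb[rule_format, of 0] by (meson abs_ge_zero order_trans)
    thus ?thesis using Phi_pos[of "0::'a"] by (simp add: zero_le_mult_iff)
  qed
  have gm: "g \<in> borel_measurable lborel"
    using borel_measurable_continuous_onI[OF cont] by simp
  have i1: "integrable lborel (\<lambda>x::'a. A * Phi x)" by (intro integrable_mult_right Phi_integrable)
  show int: "integrable lborel g"
    by (rule Bochner_Integration.integrable_bound[OF i1 gm]) (use gb A0 in \<open>auto intro!: AE_I2 simp: abs_mult abs_of_pos Phi_pos\<close>)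
  show sg: "g summable_on lat L" using lat_bound(1)[OF L A0] gb by blast
  define C where "C z = cbox (z - (h/2) *\<^sub>R One) (z + (h/2) *\<^sub>R One)" for z :: 'a
  define F where "F z = integral (C z) g" for z
  define E where "E z = F z - h ^ n * g z" for z
  define cE where "cE = B * (5/2) ^ n * (real n)\<^sup>2 * h ^ (n + 2) / 4"
  have cE0: "0 \<le> cE" unfolding cE_def using B h by simp
  have Eb: "\<bar>E z\<bar> \<le> cE * Phi z" for z
  proof -
    have "\<bar>F z - h ^ n * g z\<bar> \<le> (B * (5/2) ^ n * Phi z) * (real n)\<^sup>2 * h ^ (n + 2) / 4"
      unfolding F_def C_def n_def
    proof (rule cell_est[OF C2 cont h])
      show "0 \<le> B * (5/2) ^ DIM('a) * Phi z" using B Phi_pos[of z] by simp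
      show "\<forall>b\<in>Basis. \<forall>c\<in>Basis. \<forall>x. (\<forall>e\<in>Basis. \<bar>(x - z) \<bullet> e\<bar> \<le> 1/2) \<longrightarrow>
              \<bar>dpart c (dpart b g) x\<bar> \<le> B * (5/2) ^ DIM('a) * Phi z"
      proof (intro ballI allI impI)
        fix b c x assume b: "b \<in> (Basis::'a set)" and c: "c \<in> (Basis::'a set)"
          and x: "\<forall>e\<in>Basis. \<bar>(x - z) \<bullet> e\<bar> \<le> 1/2"
        have "\<bar>dpart c (dpart b g) x\<bar> \<le> B * Phi x" using bd2 b c by blast
        also have "\<dots> \<le> B * ((5/2) ^ DIM('a) * Phi z)" using Phi_shift[OF x] B by (rule mult_left_mono)
        finally show "\<bar>dpart c (dpart b g) x\<bar> \<le> B * (5/2) ^ DIM('a) * Phi z" by (simp add: mult.assoc)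
      qed
    qed
    thus ?thesis unfolding E_def cE_def by (simp add: mult_ac)
  qed
  have sE: "E summable_on lat L" and iE: "\<bar>infsum E (lat L)\<bar> \<le> cE * (6*L) ^ DIM('a)"
    using lat_bound[OF L cE0, of E] Eb by auto
  have Feq: "F = (\<lambda>z. E z + h ^ n * g z)" by (simp add: E_def fun_eq_iff)
  have sg2: "(\<lambda>z. h ^ n * g z) summable_on lat L" using sg by (rule summable_on_cmult_right)
  have sF: "F summable_on lat L" unfolding Feq using sE sg2 by (rule summable_on_add)
  have iF: "infsum F (lat L) = infsum E (lat L) + h ^ n * infsum g (lat L)"
    unfolding Feq by (simp add: infsum_add[OF sE sg2] infsum_cmult_right')
  
  define e where "e = from_nat_into (lat L :: 'a set)"
  have bij: "bij_betw e UNIV (lat L)"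
    unfolding e_def using lat_countable[of L] lat_infinite[of L] Lpos by (intro bij_betw_from_nat_into) auto
  define Ac where "Ac i = cellH h (e i)" for i
  have Aun: "(\<Union>i. Ac i) = UNIV"
  proof (intro equalityI subsetI)
    fix x :: 'a
    obtain z where z: "z \<in> lat L" "x \<in> cellH (1/L) z" using cellH_cover[OF Lpos] by blast
    then obtain i where "e i = z" using bij by (metis bij_betw_imp_surj_on imageE)
    thus "x \<in> (\<Union>i. Ac i)" using z unfolding Ac_def h_def by blast
  qed auto
  have Adisj: "Ac i \<inter> Ac j = {}" if "i \<noteq> j" for i j
  proof (rule ccontr)
    assume "Ac i \<inter> Ac j \<noteq> {}"
    then obtain x where "x \<in> cellH (1/L) (e i)" "x \<in> cellH (1/L) (e j)" unfolding Ac_def h_def by blast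
    moreover have "e i \<in> lat L" "e j \<in> lat L" using bij by (auto dest: bij_betw_apply)
    ultimately have "e i = e j" using cellH_disjoint[OF Lpos] by blast
    hence "i = j" using bij by (metis bij_betw_imp_inj_on inj_onD UNIV_I)
    with that show False by simp
  qed
  have cellint: "(LINT x:Ac i|lborel. g x) = F (e i)" for i
  proof -
    let ?z = "e i"
    have si: "set_integrable lborel (cellH h ?z) g"
      unfolding set_integrable_def by (rule integrable_mult_indicator[OF cellH_sets int])
    have gC: "(g has_integral F ?z) (C ?z)" unfolding F_def C_def
      by (rule integrable_integral, rule integrable_continuous, rule continuous_on_subset[OF cont]) auto
    have "(g has_integral F ?z) (cellH h ?z)"
    proof (subst has_integral_spike_set_eq)
      show "negligible {x \<in> cellH h ?z - C ?z. g x \<noteq> 0}"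
        using cellH_sub[of h ?z] h unfolding C_def by (intro negligible_subset[OF negligible_empty]) auto
      show "negligible {x \<in> C ?z - cellH h ?z. g x \<noteq> 0}"
        by (rule negligible_subset[OF cellH_diff_negligible[of ?z h]]) (auto simp: C_def)
    qed (rule gC)
    hence "integral (cellH h ?z) g = F ?z" by (rule integral_unique)
    thus ?thesis unfolding Ac_def using set_borel_integral_eq_integral(2)[OF si] by simp
  qed
  have "(\<integral>x. g x \<partial>lborel) = (LINT x:(\<Union>i. Ac i)|lborel. g x)"
    unfolding Aun by (simp add: set_lebesgue_integral_def)
  also have "\<dots> = (\<Sum>i. (LINT x:Ac i|lborel. g x))"
  proof (rule lebesgue_integral_countable_add)
    show "Ac i \<in> sets lborel" for i unfolding Ac_def by (rule cellH_sets)
    show "Ac i \<inter> Ac j = {}" if "i \<noteq> j" for i j using Adisj that by blast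
    show "set_integrable lborel (\<Union>i. Ac i) g" unfolding Aun set_integrable_def using int by simp
  qed
  also have "\<dots> = (\<Sum>i. F (e i))" by (simp add: cellint)
  also have "\<dots> = infsum F (lat L)"
  proof -
    have "(F has_sum infsum F (lat L)) (lat L)" using sF by (rule has_sum_infsum)
    hence "((\<lambda>i. F (e i)) has_sum infsum F (lat L)) UNIV" using has_sum_reindex_bij_betw[OF bij] by blast
    hence "(\<lambda>i. F (e i)) sums infsum F (lat L)" by (rule has_sum_imp_sums)
    thus ?thesis by (rule sums_unique[symmetric])
  qed
  finally have main: "(\<integral>x. g x \<partial>lborel) - (1/L) ^ DIM('a) * infsum g (lat L) = infsum E (lat L)"
    using iF unfolding h_def n_def by simp
  have "cE * (6*L) ^ DIM('a) = B * 15 ^ DIM('a) * (real DIM('a))\<^sup>2 / (4 * L\<^sup>2)"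
  proof -
    have "(5/2::real) ^ n * 6 ^ n = 15 ^ n" by (simp add: power_mult_distrib[symmetric])
    moreover have "h ^ (n + 2) * L ^ n = 1 / L\<^sup>2"
    proof -
      have "h ^ (n + 2) * L ^ n = (h * L) ^ n * h\<^sup>2" by (simp only: power_add power_mult_distrib mult_ac)
      also have "\<dots> = h\<^sup>2" using Lpos unfolding h_def by simp
      also have "\<dots> = 1 / L\<^sup>2" unfolding h_def by (simp add: power_divide)
      finally show ?thesis .
    qed
    moreover have "cE * (6*L) ^ n = B * (real n)\<^sup>2 / 4 * ((5/2) ^ n * 6 ^ n) * (h ^ (n + 2) * L ^ n)"
      unfolding cE_def by (simp add: power_mult_distrib field_simps)
    ultimately show ?thesis unfolding n_def[symmetric] by simp
  qed
  also have "\<dots> \<le> B * 15 ^ DIM('a) * (real DIM('a))\<^sup>2 / L\<^sup>2"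
    using B Lpos by (simp add: divide_le_cancel frac_le)
  finally show "\<bar>(\<integral>x. g x \<partial>lborel) - (1/L) ^ DIM('a) * infsum g (lat L)\<bar>
       \<le> B * 15 ^ DIM('a) * (real DIM('a))\<^sup>2 / L\<^sup>2" using main iE by simp
qed



lemma inner_vec_Basis_cases:
  fixes b :: "(real^'d)^'k"
  assumes "b \<in> Basis"
  obtains i u where "u \<in> (Basis :: (real^'d) set)" "b = axis i u"
  using assms unfolding Basis_vec_def by blast

lemma latt_k_lat: "latt_k L = (lat L :: ((real^'d)^'k) set)"
proof (intro equalityI subsetI)
  fix z :: "(real^'d)^'k"
  assume z: "z \<in> latt_k L"
  show "z \<in> lat L" unfolding lat_def
  proof (intro CollectI ballI)
    fix b :: "(real^'d)^'k" assume "b \<in> Basis"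
    then obtain i u where u: "u \<in> (Basis :: (real^'d) set)" "b = axis i u" by (rule inner_vec_Basis_cases)
    then obtain j where j: "u = axis j (1::real)" unfolding Basis_vec_def by auto
    have "z \<bullet> b = z $ i $ j" unfolding u j by (simp add: inner_axis)
    thus "L * (z \<bullet> b) \<in> \<int>" using z unfolding latt_k_def latt_def by auto
  qed
next
  fix z :: "(real^'d)^'k"
  assume z: "z \<in> lat L"
  have "L * (z $ i $ j) \<in> \<int>" for i j
  proof -
    have "axis i (axis j (1::real)) \<in> (Basis :: ((real^'d)^'k) set)" unfolding Basis_vec_def by auto
    moreover have "z \<bullet> axis i (axis j (1::real)) = z $ i $ j" by (simp add: inner_axis)
    ultimately show ?thesis using z unfolding lat_def by fastforce
  qed
  thus "z \<in> latt_k L" unfolding latt_k_def latt_def by auto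
qed

lemma D_part_finite:
  fixes s :: "real^'d" and F :: "((real^'d)^'k) set"
  assumes L: "L \<ge> 1" and d2: "CARD('d) \<ge> 2" and ci0: "cj i0 \<noteq> 0" and fin: "finite F"
    and F: "F \<subseteq> lat L \<inter> {z. a *\<^sub>R s + (\<Sum>i\<in>UNIV. cj i *\<^sub>R z $ i) = 0}"
  shows "(\<Sum>z\<in>F. Phi z) \<le> (6*L) ^ (DIM((real^'d)^'k) - 2)"
proof -
  define \<pi> where "\<pi> z = (\<chi> i. if i = i0 then 0 else z $ i)" for z :: "(real^'d)^'k"
  define V where "V = (\<lambda>u. axis i0 u) ` (Basis :: (real^'d) set)"
  have V: "V \<subseteq> Basis" unfolding V_def Basis_vec_def by auto
  have injV: "inj_on (\<lambda>u::real^'d. axis i0 u) Basis"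
    by (rule inj_onI) (auto simp: axis_eq_axis nonzero_Basis)
  have cardV: "card V = CARD('d)" unfolding V_def using card_image[OF injV] by simp
  have cardBV: "card (Basis - V) \<le> DIM((real^'d)^'k) - 2"
    using card_Diff_subset[OF finite_subset[OF V finite_Basis] V] cardV d2 by simp
  have pi_inner: "\<pi> z \<bullet> axis i u = (if i = i0 then 0 else z \<bullet> axis i u)" for z i and u :: "real^'d"
    unfolding \<pi>_def by (simp add: inner_axis)
  have inj: "inj_on \<pi> F"
  proof (rule inj_onI)
    fix z z' assume z: "z \<in> F" and z': "z' \<in> F" and e: "\<pi> z = \<pi> z'"
    have oth: "z $ i = z' $ i" if "i \<noteq> i0" for i
      using arg_cong[OF e, of "\<lambda>v. v $ i"] that unfolding \<pi>_def by simp
    have sz: "(\<Sum>i\<in>UNIV. cj i *\<^sub>R z $ i) = (\<Sum>i\<in>UNIV. cj i *\<^sub>R z' $ i)"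
    proof -
      have e1: "a *\<^sub>R s + (\<Sum>i\<in>UNIV. cj i *\<^sub>R z $ i) = 0" using F z by blast
      have e2: "a *\<^sub>R s + (\<Sum>i\<in>UNIV. cj i *\<^sub>R z' $ i) = 0" using F z' by blast
      show ?thesis using e1 e2 by (metis add_left_cancel)
    qed
    have "cj i0 *\<^sub>R z $ i0 + (\<Sum>i\<in>UNIV - {i0}. cj i *\<^sub>R z $ i) = cj i0 *\<^sub>R z' $ i0 + (\<Sum>i\<in>UNIV - {i0}. cj i *\<^sub>R z' $ i)"
      using sz by (simp add: sum.remove[of UNIV i0])
    moreover have "(\<Sum>i\<in>UNIV - {i0}. cj i *\<^sub>R z $ i) = (\<Sum>i\<in>UNIV - {i0}. cj i *\<^sub>R z' $ i)"
      using oth by (intro sum.cong) auto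
    ultimately have "cj i0 *\<^sub>R z $ i0 = cj i0 *\<^sub>R z' $ i0" by simp
    hence "z $ i0 = z' $ i0" using ci0 by simp
    thus "z = z'" using oth by (metis vec_eq_iff)
  qed
  have Phi_le: "Phi z \<le> Phi (\<pi> z)" for z
    unfolding Phi_def
  proof (rule prod_mono, rule conjI)
    fix b :: "(real^'d)^'k" assume "b \<in> Basis"
    then obtain i u where u: "u \<in> (Basis :: (real^'d) set)" "b = axis i u" by (rule inner_vec_Basis_cases)
    show "0 \<le> phi1 (z \<bullet> b)" by (simp add: phi1_pos less_imp_le)
    show "phi1 (z \<bullet> b) \<le> phi1 (\<pi> z \<bullet> b)"
      unfolding u(2) pi_inner using phi1_le1 phi1_pos by (auto simp: phi1_def)
  qed
  have piF: "\<pi> ` F \<subseteq> {x \<in> lat L. \<forall>b\<in>V. x \<bullet> b = 0}"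
  proof
    fix y assume "y \<in> \<pi> ` F"
    then obtain z where z: "z \<in> F" "y = \<pi> z" by blast
    have zl: "z \<in> lat L" using z F by auto
    have "y \<in> lat L" unfolding lat_def
    proof (intro CollectI ballI)
      fix b :: "(real^'d)^'k" assume b: "b \<in> Basis"
      then obtain i u where u: "u \<in> (Basis :: (real^'d) set)" "b = axis i u" by (rule inner_vec_Basis_cases)
      have "L * (z \<bullet> b) \<in> \<int>" using zl b unfolding lat_def by blast
      thus "L * (y \<bullet> b) \<in> \<int>" unfolding z(2) u(2) pi_inner by simp
    qed
    moreover have "\<forall>b\<in>V. y \<bullet> b = 0" unfolding V_def z(2) by (simp add: pi_inner)
    ultimately show "y \<in> {x \<in> lat L. \<forall>b\<in>V. x \<bullet> b = 0}" by blast
  qed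
  have "(\<Sum>z\<in>F. Phi z) \<le> (\<Sum>z\<in>F. Phi (\<pi> z))" by (intro sum_mono Phi_le)
  also have "\<dots> = (\<Sum>y\<in>\<pi> ` F. Phi y)" by (simp add: sum.reindex[OF inj])
  also have "\<dots> \<le> (6*L) ^ card (Basis - V)" by (rule lat_sum_finite[OF V L finite_imageI[OF fin] piF])
  also have "\<dots> \<le> (6*L) ^ (DIM((real^'d)^'k) - 2)" using L cardBV by (intro power_increasing) auto
  finally show ?thesis .
qed



lemma pow_arith:
  assumes L: "L \<ge> (1::real)" and n: "n \<ge> 2"
  shows "(1/L) ^ n * (6*L) ^ (n - 2) \<le> 6 ^ n / L\<^sup>2"
proof -
  obtain m where m: "n = m + 2" using n by (metis add.commute le_Suc_ex)
  have Lpos: "L > 0" using L by simp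
  have "(1/L) ^ n * (6*L) ^ (n - 2) = 6 ^ m * (L ^ m / L ^ (m + 2))"
    unfolding m by (simp add: power_mult_distrib power_one_over)
  also have "L ^ m / L ^ (m + 2) = 1 / L\<^sup>2" using Lpos by (simp add: power_add power2_eq_square)
  also have "6 ^ m * (1 / L\<^sup>2) \<le> 6 ^ n * (1 / L\<^sup>2)" unfolding m
    by (intro mult_right_mono power_increasing) auto
  finally show ?thesis by simp
qed

lemma D_sum_finite:
  fixes s :: "real^'d" and F :: "((real^'d)^'k) set"
  assumes L: "L \<ge> 1" and d2: "CARD('d) \<ge> 2" and c_nz: "\<forall>j<p. \<exists>i. c j i \<noteq> 0" and fin: "finite F"
    and F: "F \<subseteq> lat L \<inter> Dset p c0 c s"
  shows "(\<Sum>z\<in>F. Phi z) \<le> real p * (6*L) ^ (DIM((real^'d)^'k) - 2)"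
proof -
  define Dj where "Dj j = {z::(real^'d)^'k. c0 j *\<^sub>R s + (\<Sum>i\<in>UNIV. c j i *\<^sub>R z $ i) = 0}" for j
  have Fsub: "\<forall>z\<in>F. \<exists>j<p. z \<in> Dj j" using F unfolding Dset_def Dj_def by auto
  have "(\<Sum>z\<in>F. Phi z) \<le> (\<Sum>z\<in>F. \<Sum>j<p. if z \<in> Dj j then Phi z else 0)"
  proof (rule sum_mono)
    fix z assume "z \<in> F"
    then obtain j where j: "j < p" "z \<in> Dj j" using Fsub by blast
    have "Phi z = (if z \<in> Dj j then Phi z else 0)" using j by simp
    also have "\<dots> \<le> (\<Sum>j<p. if z \<in> Dj j then Phi z else 0)"
      by (rule member_le_sum) (use j in \<open>auto simp: less_imp_le[OF Phi_pos]\<close>)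
    finally show "Phi z \<le> (\<Sum>j<p. if z \<in> Dj j then Phi z else 0)" .
  qed
  also have "\<dots> = (\<Sum>j<p. \<Sum>z\<in>F. if z \<in> Dj j then Phi z else 0)" by (rule sum.swap)
  also have "\<dots> = (\<Sum>j<p. \<Sum>z\<in>{z\<in>F. z \<in> Dj j}. Phi z)"
    using fin by (simp add: sum.inter_filter)
  also have "\<dots> \<le> (\<Sum>j<p. (6*L) ^ (DIM((real^'d)^'k) - 2))"
  proof (rule sum_mono)
    fix j assume "j \<in> {..<p}"
    then obtain i0 where i0: "c j i0 \<noteq> 0" using c_nz by auto
    show "(\<Sum>z\<in>{z\<in>F. z \<in> Dj j}. Phi z) \<le> (6*L) ^ (DIM((real^'d)^'k) - 2)"
      by (rule D_part_finite[where cj="c j", OF L d2 i0]) (use fin F in \<open>auto simp: Dj_def\<close>)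
  qed
  also have "\<dots> = real p * (6*L) ^ (DIM((real^'d)^'k) - 2)" by simp
  finally show ?thesis .
qed

lemma pointwise:
  fixes g :: "(real^'d)^'k \<Rightarrow> real" and s :: "real^'d"
  assumes L: "L \<ge> 1" and d2: "CARD('d) \<ge> 2" and c_nz: "\<forall>j<p. \<exists>i. c j i \<noteq> 0"
    and C2: "C2_fun g" and gb: "\<forall>z. \<bar>g z\<bar> \<le> A * Phi z"
    and g1: "\<forall>b\<in>Basis. \<forall>z. \<bar>dpart b g z\<bar> \<le> B1"
    and bd2: "\<forall>b\<in>Basis. \<forall>c\<in>Basis. \<forall>z. \<bar>dpart c (dpart b g) z\<bar> \<le> B * Phi z" and B: "0 \<le> B"
  shows "integrable lborel g" "g summable_on (latt_k L - Dset p c0 c s)"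
    "\<bar>(1/L) ^ DIM((real^'d)^'k) * infsum g (latt_k L - Dset p c0 c s) - (\<integral>z. g z \<partial>lborel)\<bar>
       \<le> (B * 15 ^ DIM((real^'d)^'k) * (real DIM((real^'d)^'k))\<^sup>2 + real p * A * 6 ^ DIM((real^'d)^'k)) / L\<^sup>2"
    "\<bar>(1/L) ^ DIM((real^'d)^'k) * infsum g (latt_k L - Dset p c0 c s)\<bar> \<le> (1 + real p) * A * 6 ^ DIM((real^'d)^'k)"
proof -
  define n where "n = DIM((real^'d)^'k)"
  define \<Lambda> where "\<Lambda> = (lat L :: ((real^'d)^'k) set)"
  define D where "D = Dset p c0 c s"
  have Lpos: "L > 0" using L by simp
  have k0: "0 < CARD('k)" by simp
  have "CARD('d) \<le> CARD('k) * CARD('d)" using k0 by simp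
  moreover have "n = CARD('k) * CARD('d)" unfolding n_def by simp
  ultimately have n2: "n \<ge> 2" using d2 by linarith
  have A0: "0 \<le> A"
  proof -
    have "0 \<le> A * Phi (0::(real^'d)^'k)" using gb[rule_format, of 0] by (meson abs_ge_zero order_trans)
    thus ?thesis using Phi_pos[of "0::(real^'d)^'k"] by (simp add: zero_le_mult_iff)
  qed
  obtain b0 :: "(real^'d)^'k" where b0: "b0 \<in> Basis" using nonempty_Basis by blast
  have B1: "0 \<le> B1" using g1 b0 by (meson abs_ge_zero order_trans)
  have cont: "continuous_on UNIV g" using dpart_lipschitz_cont[OF C2_funD(1)[OF C2] g1 B1] .
  note co = core[OF L C2 cont gb bd2 B]
  show int: "integrable lborel g" by (rule co(1))
  have sg: "g summable_on \<Lambda>" unfolding \<Lambda>_def by (rule co(2))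
  have est: "\<bar>(\<integral>x. g x \<partial>lborel) - (1/L) ^ n * infsum g \<Lambda>\<bar> \<le> B * 15 ^ n * (real n)\<^sup>2 / L\<^sup>2"
    using co(3) unfolding n_def \<Lambda>_def .
  have lb: "(\<lambda>x. \<bar>g x\<bar>) summable_on \<Lambda>" "\<bar>infsum g \<Lambda>\<bar> \<le> A * (6*L) ^ n"
    using lat_bound(2,3)[OF L A0, of g] gb unfolding \<Lambda>_def n_def by auto
  define LD where "LD = \<Lambda> \<inter> D"
  have LDsub: "LD \<subseteq> \<Lambda>" unfolding LD_def by auto
  have sLD: "g summable_on LD" by (rule summable_on_subset_banach[OF sg LDsub])
  have saLD: "(\<lambda>x. \<bar>g x\<bar>) summable_on LD" by (rule summable_on_subset_banach[OF lb(1) LDsub])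
  have "infsum (\<lambda>x. \<bar>g x\<bar>) LD \<le> A * (real p * (6*L) ^ (n - 2))"
  proof (rule infsum_le_finite_sums[OF saLD])
    fix F assume fin: "finite F" and F: "F \<subseteq> LD"
    have "(\<Sum>x\<in>F. \<bar>g x\<bar>) \<le> (\<Sum>x\<in>F. A * Phi x)" using gb by (intro sum_mono) auto
    also have "\<dots> = A * (\<Sum>x\<in>F. Phi x)" by (simp add: sum_distrib_left)
    also have "\<dots> \<le> A * (real p * (6*L) ^ (n - 2))" unfolding n_def
      by (intro mult_left_mono D_sum_finite[OF L d2 c_nz fin] A0) (use F in \<open>auto simp: LD_def \<Lambda>_def D_def\<close>)
    finally show "(\<Sum>x\<in>F. \<bar>g x\<bar>) \<le> A * (real p * (6*L) ^ (n - 2))" .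
  qed
  moreover have "\<bar>infsum g LD\<bar> \<le> infsum (\<lambda>x. \<bar>g x\<bar>) LD"
  proof -
    have "(\<lambda>x. norm (g x)) summable_on LD" using saLD by (simp add: real_norm_def)
    thus ?thesis using norm_infsum_bound[of g LD] by (simp add: real_norm_def)
  qed
  ultimately have iLD: "\<bar>infsum g LD\<bar> \<le> A * (real p * (6*L) ^ (n - 2))" by linarith
  have eqD: "latt_k L - D = \<Lambda> - LD" unfolding LD_def \<Lambda>_def latt_k_lat by auto
  show "g summable_on (latt_k L - Dset p c0 c s)"
    using summable_on_subset_banach[OF sg, of "latt_k L - D"] unfolding eqD D_def[symmetric] by auto
  have split: "infsum g (latt_k L - D) = infsum g \<Lambda> - infsum g LD"
    unfolding eqD by (rule Infinite_Sum.infsum_Diff[OF sg sLD LDsub])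
  have pa: "(1/L) ^ n * (6*L) ^ (n - 2) \<le> 6 ^ n / L\<^sup>2" by (rule pow_arith[OF L n2])
  have hpos: "0 \<le> (1/L) ^ n" using Lpos by simp
  have t2: "\<bar>(1/L) ^ n * infsum g LD\<bar> \<le> real p * A * 6 ^ n / L\<^sup>2"
  proof -
    have "\<bar>(1/L) ^ n * infsum g LD\<bar> = (1/L) ^ n * \<bar>infsum g LD\<bar>" using hpos by (simp add: abs_mult)
    also have "\<dots> \<le> (1/L) ^ n * (A * (real p * (6*L) ^ (n - 2)))" using iLD hpos by (rule mult_left_mono)
    also have "\<dots> = real p * A * ((1/L) ^ n * (6*L) ^ (n - 2))" by (simp add: mult_ac)
    also have "\<dots> \<le> real p * A * (6 ^ n / L\<^sup>2)" using pa A0 by (intro mult_left_mono) auto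
    finally show ?thesis by simp
  qed
  show "\<bar>(1/L) ^ DIM((real^'d)^'k) * infsum g (latt_k L - Dset p c0 c s) - (\<integral>z. g z \<partial>lborel)\<bar>
       \<le> (B * 15 ^ DIM((real^'d)^'k) * (real DIM((real^'d)^'k))\<^sup>2 + real p * A * 6 ^ DIM((real^'d)^'k)) / L\<^sup>2"
  proof -
    have "(1/L) ^ n * infsum g (latt_k L - D) - (\<integral>z. g z \<partial>lborel)
        = - ((\<integral>x. g x \<partial>lborel) - (1/L) ^ n * infsum g \<Lambda>) - (1/L) ^ n * infsum g LD"
      unfolding split by (simp add: algebra_simps)
    hence "\<bar>(1/L) ^ n * infsum g (latt_k L - D) - (\<integral>z. g z \<partial>lborel)\<bar>
        \<le> B * 15 ^ n * (real n)\<^sup>2 / L\<^sup>2 + real p * A * 6 ^ n / L\<^sup>2"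
      using est t2 by (smt (verit, best) abs_minus_cancel abs_triangle_ineq4)
    thus ?thesis unfolding n_def D_def by (simp add: add_divide_distrib)
  qed
  show "\<bar>(1/L) ^ DIM((real^'d)^'k) * infsum g (latt_k L - Dset p c0 c s)\<bar> \<le> (1 + real p) * A * 6 ^ DIM((real^'d)^'k)"
  proof -
    have a1: "\<bar>(1/L) ^ n * infsum g \<Lambda>\<bar> \<le> A * 6 ^ n"
    proof -
      have "\<bar>(1/L) ^ n * infsum g \<Lambda>\<bar> = (1/L) ^ n * \<bar>infsum g \<Lambda>\<bar>" using hpos by (simp add: abs_mult)
      also have "\<dots> \<le> (1/L) ^ n * (A * (6*L) ^ n)" using lb(2) hpos by (rule mult_left_mono)
      also have "\<dots> = A * 6 ^ n" using Lpos by (simp add: power_mult_distrib power_one_over)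
      finally show ?thesis .
    qed
    have "real p * A * 6 ^ n / L\<^sup>2 \<le> real p * A * 6 ^ n / 1"
      using A0 L by (intro divide_left_mono) (auto simp: one_le_power)
    hence "real p * A * 6 ^ n / L\<^sup>2 \<le> real p * A * 6 ^ n" by simp
    hence "\<bar>(1/L) ^ n * infsum g (latt_k L - D)\<bar> \<le> A * 6 ^ n + real p * A * 6 ^ n"
      using a1 t2 unfolding split by (simp add: right_diff_distrib)
    thus ?thesis unfolding n_def D_def by (simp add: algebra_simps)
  qed
qed



lemma measurable_infsum:
  fixes f :: "'b \<Rightarrow> 'c \<Rightarrow> real"
  assumes cA: "countable A" and m: "\<And>z. z \<in> A \<Longrightarrow> (\<lambda>\<theta>. f \<theta> z) \<in> borel_measurable M"
    and s: "\<And>\<theta>. \<theta> \<in> space M \<Longrightarrow> f \<theta> summable_on A"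
  shows "(\<lambda>\<theta>. infsum (f \<theta>) A) \<in> borel_measurable M"
proof (cases "finite A")
  case True
  have "(\<lambda>\<theta>. \<Sum>z\<in>A. f \<theta> z) \<in> borel_measurable M" using m by (intro borel_measurable_sum) auto
  thus ?thesis using True by simp
next
  case False
  define e where "e = from_nat_into A"
  have bij: "bij_betw e UNIV A" unfolding e_def using cA False by (rule bij_betw_from_nat_into)
  have eA: "e i \<in> A" for i using bij by (auto dest: bij_betw_apply)
  have eq: "infsum (f \<theta>) A = (\<Sum>i. f \<theta> (e i))" if "\<theta> \<in> space M" for \<theta>
  proof -
    have "(f \<theta> has_sum infsum (f \<theta>) A) A" using s[OF that] by (rule has_sum_infsum)
    hence "((\<lambda>i. f \<theta> (e i)) has_sum infsum (f \<theta>) A) UNIV" using has_sum_reindex_bij_betw[OF bij] by blast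
    hence "(\<lambda>i. f \<theta> (e i)) sums infsum (f \<theta>) A" by (rule has_sum_imp_sums)
    thus ?thesis by (rule sums_unique)
  qed
  have "(\<lambda>\<theta>. \<Sum>i. f \<theta> (e i)) \<in> borel_measurable M"
    by (rule borel_measurable_suminf) (rule m[OF eA])
  thus ?thesis using eq by (subst measurable_cong) auto
qed

definition Pm :: "nat \<Rightarrow> (nat \<Rightarrow> real) \<Rightarrow> real" where
  "Pm m \<theta> = (\<Prod>i<m. phi1 (\<theta> i))"

lemma Pm_pos: "0 < Pm m \<theta>" unfolding Pm_def by (simp add: prod_pos phi1_pos)

lemma Pm_integrable: "integrable (lebesgue_Rm m) (Pm m)"
proof -
  interpret product_sigma_finite "\<lambda>_::nat. (lborel :: real measure)"
    unfolding product_sigma_finite_def using lborel.sigma_finite_measure_axioms by simp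
  have "integrable (lebesgue_Rm m) (\<lambda>\<theta>. \<Prod>i\<in>{..<m}. phi1 (\<theta> i))"
    by (rule product_integrable_prod) (auto intro: phi1_integrable)
  thus ?thesis unfolding Pm_def[abs_def] by simp
qed

lemma C3_Pm:
  assumes "rapid_decay_Rm m C3"
  shows "\<exists>K\<ge>0. \<forall>\<theta>\<in>Rm m. C3 \<theta> \<le> K * Pm m \<theta>"
proof -
  from assms obtain C where C: "\<forall>x\<in>Rm m. C3 x \<le> C * (1 + (\<Sum>i<m. (x i)\<^sup>2)) powr (- real (2*m) / 2)"
    unfolding rapid_decay_Rm_def by blast
  have key: "(1 + (\<Sum>i<m. (x i)\<^sup>2)) powr (- real m) \<le> Pm m x" for x :: "nat \<Rightarrow> real"
  proof -
    define S where "S = (\<Sum>i<m. (x i)\<^sup>2)"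
    have S0: "0 \<le> S" unfolding S_def by (simp add: sum_nonneg)
    have "(\<Prod>i<m. 1 + (x i)\<^sup>2) \<le> (\<Prod>i<m. 1 + S)"
    proof (rule prod_mono, rule conjI)
      fix i assume i: "i \<in> {..<m}"
      show "0 \<le> 1 + (x i)\<^sup>2" by simp
      have "(x i)\<^sup>2 \<le> S" unfolding S_def by (rule member_le_sum) (use i in auto)
      thus "1 + (x i)\<^sup>2 \<le> 1 + S" by simp
    qed
    hence *: "(\<Prod>i<m. 1 + (x i)\<^sup>2) \<le> (1 + S) ^ m" by simp
    have pos: "0 < (\<Prod>i<m. 1 + (x i)\<^sup>2)" by (rule prod_pos) (auto simp: add_pos_nonneg)
    have "(1 + S) powr (- real m) = 1 / (1 + S) ^ m"
      using S0 by (simp add: powr_minus powr_realpow divide_inverse add_pos_nonneg)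
    also have "\<dots> \<le> 1 / (\<Prod>i<m. 1 + (x i)\<^sup>2)" using * pos by (intro divide_left_mono) auto
    also have "\<dots> = Pm m x" unfolding Pm_def phi1_def by (simp add: prod_dividef)
    finally show ?thesis unfolding S_def .
  qed
  show ?thesis
  proof (intro exI[of _ "max C 0"] conjI ballI)
    fix \<theta> assume th: "\<theta> \<in> Rm m"
    have "C3 \<theta> \<le> C * (1 + (\<Sum>i<m. (\<theta> i)\<^sup>2)) powr (- real m)" using C th by simp
    also have "\<dots> \<le> max C 0 * (1 + (\<Sum>i<m. (\<theta> i)\<^sup>2)) powr (- real m)"
      by (intro mult_right_mono) auto
    also have "\<dots> \<le> max C 0 * Pm m \<theta>" by (intro mult_left_mono key) auto
    finally show "C3 \<theta> \<le> max C 0 * Pm m \<theta>" .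
  qed auto
qed



theorem theorem3p1:
  fixes G :: "real^'d \<Rightarrow> (real^'d)^'k \<Rightarrow> (nat \<Rightarrow> real) \<Rightarrow> real \<Rightarrow> real"
    and m p :: nat
    and c0 :: "nat \<Rightarrow> real" and c :: "nat \<Rightarrow> 'k::finite \<Rightarrow> real"
    and C1 :: "real^'d \<Rightarrow> real" and C2 :: "(real^'d)^'k \<Rightarrow> real"
    and C3 :: "(nat \<Rightarrow> real) \<Rightarrow> real"
  assumes d2: "CARD('d) \<ge> 2"
    and c_nz: "\<forall>j<p. \<exists>i. c j i \<noteq> 0"
    and meas: "\<forall>s. (\<lambda>(z, \<theta>, \<nu>). G s z \<theta> \<nu>) \<in> borel_measurable
                 (lborel \<Otimes>\<^sub>M (lebesgue_Rm m \<Otimes>\<^sub>M restrict_space lborel {0<..1/2}))"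
    and C2z: "\<forall>s. \<forall>\<theta>\<in>Rm m. \<forall>\<nu>\<in>{0<..1/2}. C2_fun (\<lambda>z. G s z \<theta> \<nu>)"
    and dC1: "rapid_decay C1" and dC2: "rapid_decay C2" and dC3: "rapid_decay_Rm m C3"
    and bd0: "\<forall>s z. \<forall>\<theta>\<in>Rm m. \<forall>\<nu>\<in>{0<..1/2}. \<bar>G s z \<theta> \<nu>\<bar> \<le> C1 s * C2 z * C3 \<theta>"
    and bd1: "\<forall>s z. \<forall>\<theta>\<in>Rm m. \<forall>\<nu>\<in>{0<..1/2}. \<forall>b\<in>Basis.
                \<bar>dpart b (\<lambda>z. G s z \<theta> \<nu>) z\<bar> \<le> \<nu> powr (-1) * C1 s * C2 z * C3 \<theta>"
    and bd2: "\<forall>s z. \<forall>\<theta>\<in>Rm m. \<forall>\<nu>\<in>{0<..1/2}. \<forall>b\<in>Basis. \<forall>b'\<in>Basis.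
                \<bar>dpart b' (dpart b (\<lambda>z. G s z \<theta> \<nu>)) z\<bar> \<le> \<nu> powr (-2) * C1 s * C2 z * C3 \<theta>"
  shows "\<exists>C. rapid_decay C \<and>
    (\<forall>\<nu>\<in>{0<..1/2}. \<forall>L::real. L \<ge> 1 \<longrightarrow> (\<forall>s.
      \<bar>(\<integral>\<theta>. L powr (- real (CARD('k) * CARD('d))) *
              infsum (\<lambda>z. G s z \<theta> \<nu>) (latt_k L - Dset p c0 c s) \<partial>lebesgue_Rm m)
       - (\<integral>\<theta>. (\<integral>z. G s z \<theta> \<nu> \<partial>lborel) \<partial>lebesgue_Rm m)\<bar>
      \<le> C s * \<nu> powr (-2) * L powr (-2)))"
proof -
  define n where "n = CARD('k) * CARD('d)"
  have DIMn: "DIM((real^'d)^'k) = n" unfolding n_def by simp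
  obtain K2 where K2: "K2 \<ge> 0" "\<forall>z. C2 z \<le> K2 * Phi z" using rapid_Phi[OF dC2] by blast
  obtain K3 where K3: "K3 \<ge> 0" "\<forall>\<theta>\<in>Rm m. C3 \<theta> \<le> K3 * Pm m \<theta>" using C3_Pm[OF dC3] by blast
  have C1nn: "\<And>s. 0 \<le> C1 s" using dC1 unfolding rapid_decay_def by blast
  have C2nn: "\<And>z. 0 \<le> C2 z" using dC2 unfolding rapid_decay_def by blast
  have C3nn: "\<And>\<theta>. \<theta> \<in> Rm m \<Longrightarrow> 0 \<le> C3 \<theta>" using dC3 unfolding rapid_decay_Rm_def by blast
  define Kp where "Kp = (15 ^ n * (real n)\<^sup>2 + real p * 6 ^ n) * K2"
  have Kp0: "0 \<le> Kp" unfolding Kp_def using K2 by simp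
  define IP where "IP = (\<integral>\<theta>. Pm m \<theta> \<partial>lebesgue_Rm m)"
  have IP0: "0 \<le> IP" unfolding IP_def by (rule integral_nonneg_AE) (simp add: Pm_pos less_imp_le)
  define IPhi where "IPhi = (\<integral>z. Phi z \<partial>(lborel :: ((real^'d)^'k) measure))"
  define Kc where "Kc = Kp * K3 * IP"
  have Kc0: "0 \<le> Kc" unfolding Kc_def using Kp0 K3 IP0 by simp
  show ?thesis
  proof (intro exI[of _ "\<lambda>s. Kc * C1 s"] conjI ballI allI impI)
    show "rapid_decay (\<lambda>s. Kc * C1 s)"
      unfolding rapid_decay_def
    proof (intro conjI allI)
      show "continuous_on UNIV (\<lambda>s. Kc * C1 s)"
        using dC1 unfolding rapid_decay_def by (intro continuous_intros) auto
      show "0 \<le> Kc * C1 x" for x using Kc0 C1nn by simp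
      fix N :: nat
      obtain CN where CN: "\<forall>x. C1 x \<le> CN * (1 + (norm x)\<^sup>2) powr (- real N / 2)"
        using dC1 unfolding rapid_decay_def by blast
      show "\<exists>C. \<forall>x. Kc * C1 x \<le> C * (1 + (norm x)\<^sup>2) powr (- real N / 2)"
        by (rule exI[of _ "Kc * CN"]) (use CN Kc0 in \<open>auto simp: mult.assoc intro: mult_left_mono\<close>)
    qed
  next
    fix \<nu> L :: real and s :: "real^'d"
    assume \<nu>: "\<nu> \<in> {0<..1/2}" and L: "1 \<le> L"
    have \<nu>pos: "0 < \<nu>" and \<nu>le: "\<nu> \<le> 1/2" using \<nu> by auto
    have Lpos: "0 < L" using L by simp
    have inv\<nu>: "1 \<le> 1 / \<nu>\<^sup>2"
    proof -
      have "\<nu>\<^sup>2 \<le> 1" using \<nu>pos \<nu>le by (simp add: power_le_one)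
      thus ?thesis using \<nu>pos by simp
    qed
    define Dl where "Dl = latt_k L - Dset p c0 c s"
    define S where "S \<theta> = L powr (- real (CARD('k) * CARD('d))) * infsum (\<lambda>z. G s z \<theta> \<nu>) Dl" for \<theta>
    define J where "J \<theta> = (\<integral>z. G s z \<theta> \<nu> \<partial>lborel)" for \<theta>
    have Lpow: "L powr (- real (CARD('k) * CARD('d))) = (1/L) ^ n"
    proof -
      have "L powr (- real (CARD('k) * CARD('d))) = inverse (L powr real n)" unfolding n_def by (rule powr_minus)
      also have "\<dots> = inverse (L ^ n)" using powr_realpow[OF Lpos, of n] by simp
      also have "\<dots> = (1/L) ^ n" by (simp add: power_one_over inverse_eq_divide)
      finally show ?thesis .
    qed
    define X where "X \<theta> = K2 * C1 s * C3 \<theta>" for \<theta>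
    have pw: "integrable lborel (\<lambda>z. G s z \<theta> \<nu>) \<and> (\<lambda>z. G s z \<theta> \<nu>) summable_on Dl \<and>
        \<bar>S \<theta> - J \<theta>\<bar> \<le> Kp * C1 s * C3 \<theta> * (1 / \<nu>\<^sup>2) * (1 / L\<^sup>2) \<and>
        \<bar>S \<theta>\<bar> \<le> (1 + real p) * X \<theta> * 6 ^ n \<and> \<bar>J \<theta>\<bar> \<le> X \<theta> * IPhi"
      if th: "\<theta> \<in> Rm m" for \<theta>
    proof -
      define g where "g z = G s z \<theta> \<nu>" for z
      have X0: "0 \<le> X \<theta>" unfolding X_def using K2 C1nn C3nn[OF th] by simp
      have CC: "0 \<le> C1 s * C3 \<theta>" using C1nn C3nn[OF th] by simp
      have C2g: "C2_fun g" unfolding g_def using C2z th \<nu> by blast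
      have gb: "\<forall>z. \<bar>g z\<bar> \<le> X \<theta> * Phi z"
      proof
        fix z
        have "\<bar>g z\<bar> \<le> C1 s * C2 z * C3 \<theta>" unfolding g_def using bd0 th \<nu> by blast
        also have "\<dots> = (C1 s * C3 \<theta>) * C2 z" by (simp add: mult_ac)
        also have "\<dots> \<le> (C1 s * C3 \<theta>) * (K2 * Phi z)" using CC K2(2) by (intro mult_left_mono) auto
        finally show "\<bar>g z\<bar> \<le> X \<theta> * Phi z" unfolding X_def by (simp add: mult_ac)
      qed
      have g1: "\<forall>b\<in>Basis. \<forall>z. \<bar>dpart b g z\<bar> \<le> \<nu> powr (-1) * (C1 s * C3 \<theta>) * K2"
      proof (intro ballI allI)
        fix b :: "(real^'d)^'k" and z assume b: "b \<in> Basis"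
        have "\<bar>dpart b g z\<bar> \<le> \<nu> powr (-1) * C1 s * C2 z * C3 \<theta>" unfolding g_def using bd1 th \<nu> b by blast
        also have "\<dots> = (\<nu> powr (-1) * (C1 s * C3 \<theta>)) * C2 z" by (simp add: mult_ac)
        also have "\<dots> \<le> (\<nu> powr (-1) * (C1 s * C3 \<theta>)) * (K2 * 1)"
        proof (rule mult_left_mono)
          show "C2 z \<le> K2 * 1" using K2 Phi_le1[of z] by (meson mult_left_mono order_trans)
          show "0 \<le> \<nu> powr (-1) * (C1 s * C3 \<theta>)" using CC by simp
        qed
        finally show "\<bar>dpart b g z\<bar> \<le> \<nu> powr (-1) * (C1 s * C3 \<theta>) * K2" by simp
      qed
      have bd2g: "\<forall>b\<in>Basis. \<forall>c\<in>Basis. \<forall>z. \<bar>dpart c (dpart b g) z\<bar> \<le> (X \<theta> / \<nu>\<^sup>2) * Phi z"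
      proof (intro ballI allI)
        fix b c :: "(real^'d)^'k" and z assume b: "b \<in> Basis" and c: "c \<in> Basis"
        have "\<bar>dpart c (dpart b g) z\<bar> \<le> \<nu> powr (-2) * C1 s * C2 z * C3 \<theta>" unfolding g_def using bd2 th \<nu> b c by blast
        also have "\<dots> = (\<nu> powr (-2) * (C1 s * C3 \<theta>)) * C2 z" by (simp add: mult_ac)
        also have "\<dots> \<le> (\<nu> powr (-2) * (C1 s * C3 \<theta>)) * (K2 * Phi z)"
          using CC K2(2) by (intro mult_left_mono) auto
        also have "\<nu> powr (-2) = 1 / \<nu>\<^sup>2" using \<nu>pos powr_realpow[of \<nu> 2] by (simp add: powr_minus divide_inverse)
        finally show "\<bar>dpart c (dpart b g) z\<bar> \<le> (X \<theta> / \<nu>\<^sup>2) * Phi z" unfolding X_def by (simp add: mult_ac)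
      qed
      have B0: "0 \<le> X \<theta> / \<nu>\<^sup>2" using X0 by simp
      note P = pointwise[OF L d2 c_nz C2g gb g1 bd2g B0]
      have gint: "integrable lborel g" by (rule P(1))
      have e1: "S \<theta> = (1/L) ^ n * infsum g Dl" unfolding S_def Lpow g_def by simp
      have e2: "J \<theta> = (\<integral>z. g z \<partial>lborel)" unfolding J_def g_def by simp
      have a1: "\<bar>S \<theta> - J \<theta>\<bar> \<le> ((X \<theta> / \<nu>\<^sup>2) * 15 ^ n * (real n)\<^sup>2 + real p * X \<theta> * 6 ^ n) / L\<^sup>2"
        unfolding e1 e2 Dl_def by (rule P(3)[unfolded DIMn])
      have \<nu>2: "0 < \<nu>\<^sup>2" using \<nu>pos by simp
      have r: "Kp * C1 s * C3 \<theta> * (1 / \<nu>\<^sup>2) = (X \<theta> / \<nu>\<^sup>2) * 15 ^ n * (real n)\<^sup>2 + (real p * X \<theta> * 6 ^ n) * (1 / \<nu>\<^sup>2)"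
        using \<nu>2 by (simp add: Kp_def X_def field_simps)
      have q: "(real p * X \<theta> * 6 ^ n) * 1 \<le> (real p * X \<theta> * 6 ^ n) * (1 / \<nu>\<^sup>2)"
        using inv\<nu> X0 by (intro mult_left_mono) auto
      have le1: "((X \<theta> / \<nu>\<^sup>2) * 15 ^ n * (real n)\<^sup>2 + real p * X \<theta> * 6 ^ n) \<le> Kp * C1 s * C3 \<theta> * (1 / \<nu>\<^sup>2)"
        using r q by linarith
      have "\<bar>S \<theta> - J \<theta>\<bar> \<le> (Kp * C1 s * C3 \<theta> * (1 / \<nu>\<^sup>2)) / L\<^sup>2"
        by (rule order_trans[OF a1 divide_right_mono[OF le1]]) simp
      hence a2: "\<bar>S \<theta> - J \<theta>\<bar> \<le> Kp * C1 s * C3 \<theta> * (1 / \<nu>\<^sup>2) * (1 / L\<^sup>2)" by simp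
      have a3: "\<bar>S \<theta>\<bar> \<le> (1 + real p) * X \<theta> * 6 ^ n" unfolding e1 Dl_def by (rule P(4)[unfolded DIMn])
      have a4: "\<bar>J \<theta>\<bar> \<le> X \<theta> * IPhi"
      proof -
        have "\<bar>J \<theta>\<bar> \<le> (\<integral>z. \<bar>g z\<bar> \<partial>lborel)" unfolding e2 using integral_norm_bound[of lborel g] by simp
        also have "\<dots> \<le> (\<integral>z. X \<theta> * Phi (z::(real^'d)^'k) \<partial>lborel)"
          by (rule integral_mono[OF integrable_abs[OF gint] integrable_mult_right[OF Phi_integrable]]) (use gb in auto)
        also have "\<dots> = X \<theta> * IPhi" unfolding IPhi_def by simp
        finally show ?thesis .
      qed
      show ?thesis using gint P(2) a2 a3 a4 unfolding g_def Dl_def by blast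
    qed
    
    have mG: "(\<lambda>\<theta>. G s z \<theta> \<nu>) \<in> borel_measurable (lebesgue_Rm m)" for z
    proof -
      have 1: "(\<lambda>\<theta>. (z, \<theta>, \<nu>)) \<in> measurable (lebesgue_Rm m) (lborel \<Otimes>\<^sub>M (lebesgue_Rm m \<Otimes>\<^sub>M restrict_space lborel {0<..1/2}))"
        using \<nu> by (intro measurable_Pair measurable_const measurable_ident_sets) (auto simp: space_restrict_space)
      from measurable_compose[OF 1 meas[rule_format, of s]] show ?thesis by simp
    qed
    have mJ: "J \<in> borel_measurable (lebesgue_Rm m)"
    proof -
      have 2: "(\<lambda>x. (snd x, fst x, \<nu>)) \<in> measurable (lebesgue_Rm m \<Otimes>\<^sub>M lborel) (lborel \<Otimes>\<^sub>M (lebesgue_Rm m \<Otimes>\<^sub>M restrict_space lborel {0<..1/2}))"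
        using \<nu> by (intro measurable_Pair measurable_const measurable_fst measurable_snd) (auto simp: space_restrict_space)
      have "(\<lambda>x. G s (snd x) (fst x) \<nu>) \<in> borel_measurable (lebesgue_Rm m \<Otimes>\<^sub>M lborel)"
        using measurable_compose[OF 2 meas[rule_format, of s]] by simp
      hence "case_prod (\<lambda>\<theta> z. G s z \<theta> \<nu>) \<in> borel_measurable (lebesgue_Rm m \<Otimes>\<^sub>M lborel)"
        by (simp add: case_prod_beta')
      from lborel.borel_measurable_lebesgue_integral[OF this] show ?thesis unfolding J_def[abs_def] .
    qed
    have cDl: "countable Dl"
    proof -
      have "Dl \<subseteq> lat L" unfolding Dl_def latt_k_lat by auto
      thus ?thesis using lat_countable[of L] Lpos countable_subset by auto
    qed
    have mS: "S \<in> borel_measurable (lebesgue_Rm m)"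
    proof -
      have "(\<lambda>\<theta>. infsum (\<lambda>z. G s z \<theta> \<nu>) Dl) \<in> borel_measurable (lebesgue_Rm m)"
        by (rule measurable_infsum[OF cDl mG]) (use pw in \<open>auto simp: space_PiM\<close>)
      thus ?thesis unfolding S_def[abs_def] by (intro borel_measurable_times borel_measurable_const)
    qed
    
    have spaceRm: "space (lebesgue_Rm m) = Rm m" by (simp add: space_PiM)
    have intP: "integrable (lebesgue_Rm m) (\<lambda>\<theta>. c' * Pm m \<theta>)" for c' by (intro integrable_mult_right Pm_integrable)
    have intS: "integrable (lebesgue_Rm m) S"
    proof (rule Bochner_Integration.integrable_bound[OF intP mS])
      show "AE \<theta> in lebesgue_Rm m. norm (S \<theta>) \<le> norm ((1 + real p) * 6 ^ n * K2 * C1 s * K3 * Pm m \<theta>)"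
      proof (rule AE_I2)
        fix \<theta> assume "\<theta> \<in> space (lebesgue_Rm m)"
        hence th: "\<theta> \<in> Rm m" unfolding spaceRm .
        have "\<bar>S \<theta>\<bar> \<le> (1 + real p) * X \<theta> * 6 ^ n" using pw[OF th] by blast
        also have "\<dots> = ((1 + real p) * 6 ^ n * K2 * C1 s) * C3 \<theta>" unfolding X_def by (simp add: mult_ac)
        also have "\<dots> \<le> ((1 + real p) * 6 ^ n * K2 * C1 s) * (K3 * Pm m \<theta>)"
          using K3 th C1nn[of s] K2(1) by (intro mult_left_mono) auto
        finally show "norm (S \<theta>) \<le> norm ((1 + real p) * 6 ^ n * K2 * C1 s * K3 * Pm m \<theta>)"
          using K2 K3 C1nn[of s] Pm_pos[of m \<theta>] by (simp add: mult_ac abs_mult)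
      qed
    qed
    have intJ: "integrable (lebesgue_Rm m) J"
    proof (rule Bochner_Integration.integrable_bound[OF intP mJ])
      show "AE \<theta> in lebesgue_Rm m. norm (J \<theta>) \<le> norm ((K2 * C1 s * IPhi * K3) * Pm m \<theta>)"
      proof (rule AE_I2)
        fix \<theta> assume "\<theta> \<in> space (lebesgue_Rm m)"
        hence th: "\<theta> \<in> Rm m" unfolding spaceRm .
        have IPhi0: "0 \<le> IPhi" unfolding IPhi_def by (rule integral_nonneg_AE) (simp add: Phi_pos less_imp_le)
        have "\<bar>J \<theta>\<bar> \<le> X \<theta> * IPhi" using pw[OF th] by blast
        also have "\<dots> = (K2 * C1 s * IPhi) * C3 \<theta>" unfolding X_def by (simp add: mult_ac)
        also have "\<dots> \<le> (K2 * C1 s * IPhi) * (K3 * Pm m \<theta>)"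
          using K3 th C1nn K2 IPhi0 by (intro mult_left_mono) auto
        finally show "norm (J \<theta>) \<le> norm ((K2 * C1 s * IPhi * K3) * Pm m \<theta>)"
          using K2 K3 C1nn[of s] Pm_pos[of m \<theta>] IPhi0 by (simp add: mult_ac abs_mult)
      qed
    qed
    define c' where "c' = Kp * C1 s * K3 * (1 / \<nu>\<^sup>2) * (1 / L\<^sup>2)"
    have "\<bar>(\<integral>\<theta>. S \<theta> \<partial>lebesgue_Rm m) - (\<integral>\<theta>. J \<theta> \<partial>lebesgue_Rm m)\<bar> = \<bar>\<integral>\<theta>. (S \<theta> - J \<theta>) \<partial>lebesgue_Rm m\<bar>"
      using intS intJ by simp
    also have "\<dots> \<le> (\<integral>\<theta>. \<bar>S \<theta> - J \<theta>\<bar> \<partial>lebesgue_Rm m)" using integral_norm_bound[of "lebesgue_Rm m" "\<lambda>\<theta>. S \<theta> - J \<theta>"] by simp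
    also have "\<dots> \<le> (\<integral>\<theta>. c' * Pm m \<theta> \<partial>lebesgue_Rm m)"
    proof (rule integral_mono)
      show "integrable (lebesgue_Rm m) (\<lambda>\<theta>. \<bar>S \<theta> - J \<theta>\<bar>)" using intS intJ by auto
      show "integrable (lebesgue_Rm m) (\<lambda>\<theta>. c' * Pm m \<theta>)" by (rule intP)
      fix \<theta> assume "\<theta> \<in> space (lebesgue_Rm m)"
      hence th: "\<theta> \<in> Rm m" unfolding spaceRm .
      have "\<bar>S \<theta> - J \<theta>\<bar> \<le> Kp * C1 s * C3 \<theta> * (1 / \<nu>\<^sup>2) * (1 / L\<^sup>2)" using pw[OF th] by blast
      also have "\<dots> = (Kp * C1 s * (1 / \<nu>\<^sup>2) * (1 / L\<^sup>2)) * C3 \<theta>" by (simp add: mult_ac)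
      also have "\<dots> \<le> (Kp * C1 s * (1 / \<nu>\<^sup>2) * (1 / L\<^sup>2)) * (K3 * Pm m \<theta>)"
        using K3 th C1nn Kp0 by (intro mult_left_mono) auto
      finally show "\<bar>S \<theta> - J \<theta>\<bar> \<le> c' * Pm m \<theta>" unfolding c'_def by (simp add: mult_ac)
    qed
    also have "\<dots> = c' * IP" unfolding IP_def by simp
    also have "\<dots> = Kc * C1 s * \<nu> powr (-2) * L powr (-2)"
    proof -
      have "\<nu> powr (-2) = 1 / \<nu>\<^sup>2" using \<nu>pos powr_realpow[of \<nu> 2] by (simp add: powr_minus divide_inverse)
      moreover have "L powr (-2) = 1 / L\<^sup>2" using Lpos powr_realpow[of L 2] by (simp add: powr_minus divide_inverse)
      ultimately show ?thesis unfolding c'_def Kc_def by (simp add: mult_ac)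
    qed
    finally show "\<bar>(\<integral>\<theta>. L powr (- real (CARD('k) * CARD('d))) * infsum (\<lambda>z. G s z \<theta> \<nu>) (latt_k L - Dset p c0 c s) \<partial>lebesgue_Rm m)
       - (\<integral>\<theta>. (\<integral>z. G s z \<theta> \<nu> \<partial>lborel) \<partial>lebesgue_Rm m)\<bar> \<le> Kc * C1 s * \<nu> powr (-2) * L powr (-2)"
      unfolding S_def J_def Dl_def .
  qed
qed


end
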